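(* Let $X_1,X_2$, $A,B,C,D$, $c_A,c_D,L$, $X$, $\mathcal{A}$, $\mathcal{D}$, $M_1,M_2$ be as in the context, and assume that the relative bound estimates hold with $L=0$. Assume moreover that $$\|\mathcal{D}x\|_X\lesssim\|\mathcal{A}x\|_X\quad\text{for all }x\in\mathsf{D}(\mathcal{D})=\mathsf{D}(\mathcal{A}).$$ (a) If $A$ and $D$ are sectorial, then for each $\psi\in[\omega(A)\vee\omega(D),\pi)$ the following are equivalent: (1) $\mathcal{A}$ is sectorial of angle $\psi$; (2) $\overline{\mathsf{R}(\mathcal{A})}=X$, and for all $\phi>\psi$ and for one $j\in\{1,2\}$, $M_j(\lambda)^{-1}\in\mathscr{L}(X_j)$ for all $\lambda\in\complement\overline{\Sigma_\phi}$ and $\sup\{\|M_j(\lambda)^{-1}\|:\lambda\in\complement\overline{\Sigma_\phi}\}<\infty$. (b) If $A$ and $D$ are $\mathcal{R}$-sectorial, then for each $\psi\in[\omega_{\mathcal{R}}(A)\vee\omega_{\mathcal{R}}(D),\pi)$ the following are equivalent: (1) $\mathcal{A}$ is $\mathcal{R}$-sectorial of angle $\psi$; (2) $\overline{\mathsf{R}(\mathcal{A})}=X$, and for all $\phi>\psi$ and for one $j\in\{1,2\}$, $M_j(\lambda)^{-1}\in\mathscr{L}(X_j)$ for all $\lambda\in\complement\overline{\Sigma_\phi}$ and $\mathcal{R}(M_j(\lambda)^{-1}:\lambda\in\complement\overline{\Sigma_\phi})<\infty$. (c) If $X$ is reflexive, then the condition $\overline{\mathsf{R}(\mathcal{A})}=X$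 can be removed from (a)(2) and (b)(2).
   Context: All Banach spaces are complex. For $\psi\in(0,\pi)$, $\Sigma_\psi=\{z\in\mathbb{C}\setminus\{0\}:|\arg z|<\psi\}$ and $\complement\overline{\Sigma_\psi}=\mathbb{C}\setminus\overline{\Sigma_\psi}$. A linear operator $T$ on a Banach space $Y$ is sectorial if there is $\omega\in(0,\pi)$ with $\sigma(T)\subseteq\overline{\Sigma_\omega}$, $\overline{\mathsf{D}(T)}=\overline{\mathsf{R}(T)}=Y$ and $\sup_{\lambda\in\complement\overline{\Sigma_\omega}}\|\lambda(\lambda-T)^{-1}\|<\infty$; the infimum of such $\omega$ is $\omega(T)$. A family $\mathscr{J}\subseteq\mathscr{L}(E,F)$ is $\mathcal{R}$-bounded if there is $K$ with $\mathbb{E}\|\sum_{n=1}^m\varepsilon_nT_nx_n\|_F^2\le K^2\mathbb{E}\|\sum_{n=1}^m\varepsilon_nx_n\|_E^2$ for all $m$, $T_n\in\mathscr{J}$, $x_n\in E$, where $(\varepsilon_n)$ are independent random variables with $\mathbb{P}(\varepsilon_n=\pm1)=1/2$; the least such $K$ is $\mathcal{R}(\mathscr{J})$. A sectorial $T$ is $\mathcal{R}$-sectorial if for some $\sigma\in(\omega(T),\pi)$ the family $\{\lambda(\lambda-T)^{-1}:\lambda\in\complement\overline{\Sigma_\sigma}\}$ is $\mathcal{R}$-bounded; $\omega_{\mathcal{R}}(T)$ is the infimum of such $\sigma$. "Sectorial (resp. $\mathcal{R}$-sectorial) of angle $\psi$" means sectorial with $\omega(\cdot)\le\psi$ (resp.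 $\mathcal{R}$-sectorial with $\omega_{\mathcal{R}}(\cdot)\le\psi$). Setting: $X_1,X_2$ Banach spaces; $A:\mathsf{D}(A)\subseteq X_1\to X_1$ and $D:\mathsf{D}(D)\subseteq X_2\to X_2$ closed densely defined linear operators; $B:\mathsf{D}(B)\subseteq X_2\to X_1$, $C:\mathsf{D}(C)\subseteq X_1\to X_2$ linear with $\mathsf{D}(D)\subseteq\mathsf{D}(B)$, $\mathsf{D}(A)\subseteq\mathsf{D}(C)$, and constants $c_A,c_D,L\ge0$ with $\|Cx\|_{X_2}\le c_A\|Ax\|_{X_1}+L\|x\|_{X_1}$ ($x\in\mathsf{D}(A)$), $\|By\|_{X_1}\le c_D\|Dy\|_{X_2}+L\|y\|_{X_2}$ ($y\in\mathsf{D}(D)$). $X=X_1\times X_2$, $\mathcal{A}=\begin{bmatrix}A&B\\C&D\end{bmatrix}$, $\mathcal{D}=\begin{bmatrix}A&0\\0&D\end{bmatrix}$, both with domain $\mathsf{D}(A)\times\mathsf{D}(D)$. For $\lambda\in\rho(A)\cap\rho(D)$: $M_1(\lambda)=I-B(\lambda-D)^{-1}C(\lambda-A)^{-1}\in\mathscr{L}(X_1)$ and $M_2(\lambda)=I-C(\lambda-A)^{-1}B(\lambda-D)^{-1}\in\mathscr{L}(X_2)$. *)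

theory Defs
  imports "HOL-Analysis.Analysis"
begin

class complex_vector = real_vector +
  fixes cscale :: "complex \<Rightarrow> 'a \<Rightarrow> 'a"
  assumes cscale_add_right: "cscale a (x + y) = cscale a x + cscale a y"
    and cscale_add_left: "cscale (a + b) x = cscale a x + cscale b x"
    and cscale_cscale: "cscale a (cscale b x) = cscale (a * b) x"
    and cscale_one: "cscale 1 x = x"
    and scaleR_cscale: "scaleR r x = cscale (complex_of_real r) x"

class complex_normed_vector = complex_vector + real_normed_vector +
  assumes norm_cscale: "norm (cscale a x) = cmod a * norm x"

instantiation complex :: complex_normed_vector
begin
definition cscale_complex :: "complex \<Rightarrow> complex \<Rightarrow> complex" where
  "cscale_complex a x = a * x"
instance
  by standard (auto simp: cscale_complex_def algebra_simps norm_mult scaleR_conv_of_real)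
end

instantiation prod :: (complex_vector, complex_vector) complex_vector
begin
definition cscale_prod :: "complex \<Rightarrow> 'a \<times> 'b \<Rightarrow> 'a \<times> 'b" where
  "cscale_prod a z = (cscale a (fst z), cscale a (snd z))"
instance
  by standard (auto simp: cscale_prod_def cscale_add_right cscale_add_left
      cscale_cscale cscale_one scaleR_prod_def scaleR_cscale)
end

instance prod :: (complex_normed_vector, complex_normed_vector) complex_normed_vector
proof
  fix a :: complex and x :: "'a \<times> 'b"
  show "norm (cscale a x) = cmod a * norm x"
    by (simp add: cscale_prod_def norm_prod_def norm_cscale power_mult_distrib
        distrib_left[symmetric] real_sqrt_mult)
qed

definition clinear_on :: "'a::complex_vector set \<Rightarrow> ('a \<Rightarrow> 'b::complex_vector) \<Rightarrow> bool" where
  "clinear_on DT T \<longleftrightarrow> 0 \<in> DT \<and>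
     (\<forall>x\<in>DT. \<forall>y\<in>DT. x + y \<in> DT \<and> T (x + y) = T x + T y) \<and>
     (\<forall>c. \<forall>x\<in>DT. cscale c x \<in> DT \<and> T (cscale c x) = cscale c (T x))"

definition bounded_clinear :: "('a::complex_normed_vector \<Rightarrow> 'b::complex_normed_vector) \<Rightarrow> bool" where
  "bounded_clinear f \<longleftrightarrow> bounded_linear f \<and> (\<forall>c x. f (cscale c x) = cscale c (f x))"

definition closed_op :: "'a::complex_normed_vector set \<Rightarrow> ('a \<Rightarrow> 'b::complex_normed_vector) \<Rightarrow> bool" where
  "closed_op DT T \<longleftrightarrow> closed {(x, T x) | x. x \<in> DT}"

definition resolvent :: "'a::complex_normed_vector set \<Rightarrow> ('a \<Rightarrow> 'a) \<Rightarrow> complex \<Rightarrow> 'a \<Rightarrow> 'a" where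
  "resolvent DT T l = inv_into DT (\<lambda>x. cscale l x - T x)"

definition resolvent_set :: "'a::complex_normed_vector set \<Rightarrow> ('a \<Rightarrow> 'a) \<Rightarrow> complex set" where
  "resolvent_set DT T = {l. bij_betw (\<lambda>x. cscale l x - T x) DT UNIV \<and>
                            bounded_clinear (resolvent DT T l)}"

definition sector :: "real \<Rightarrow> complex set" where
  "sector \<psi> = {z. z \<noteq> 0 \<and> \<bar>Arg z\<bar> < \<psi>}"

definition sect_cond :: "'a::complex_normed_vector set \<Rightarrow> ('a \<Rightarrow> 'a) \<Rightarrow> real \<Rightarrow> bool" where
  "sect_cond DT T \<omega> \<longleftrightarrow> 0 < \<omega> \<and> \<omega> < pi \<and>
     - closure (sector \<omega>) \<subseteq> resolvent_set DT T \<and>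
     (\<exists>K. \<forall>l \<in> - closure (sector \<omega>). onorm (\<lambda>x. cscale l (resolvent DT T l x)) \<le> K)"

definition sectorial :: "'a::complex_normed_vector set \<Rightarrow> ('a \<Rightarrow> 'a) \<Rightarrow> bool" where
  "sectorial DT T \<longleftrightarrow> clinear_on DT T \<and> closure DT = UNIV \<and> closure (T ` DT) = UNIV \<and>
     (\<exists>\<omega>. sect_cond DT T \<omega>)"

definition sect_angle :: "'a::complex_normed_vector set \<Rightarrow> ('a \<Rightarrow> 'a) \<Rightarrow> real" where
  "sect_angle DT T = Inf {\<omega>. sect_cond DT T \<omega>}"

definition sectorial_of_angle :: "'a::complex_normed_vector set \<Rightarrow> ('a \<Rightarrow> 'a) \<Rightarrow> real \<Rightarrow> bool" where
  "sectorial_of_angle DT T \<psi> \<longleftrightarrow> sectorial DT T \<and> sect_angle DT T \<le> \<psi>"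

text \<open>Rademacher average E || sum_{n<m} eps_n x_n ||^2, the expectation over independent
  symmetric signs written as the average over all sign vectors.\<close>
definition rad_avg :: "nat \<Rightarrow> (nat \<Rightarrow> 'a::real_normed_vector) \<Rightarrow> real" where
  "rad_avg m x = (\<Sum>\<epsilon> \<in> PiE {..<m} (\<lambda>_. {-1, 1::real}). (norm (\<Sum>n<m. \<epsilon> n *\<^sub>R x n))\<^sup>2) / 2 ^ m"

definition R_bounded :: "('a::complex_normed_vector \<Rightarrow> 'b::complex_normed_vector) set \<Rightarrow> bool" where
  "R_bounded J \<longleftrightarrow> (\<forall>T\<in>J. bounded_clinear T) \<and>
     (\<exists>K. \<forall>m Ts xs. (\<forall>n<m. Ts n \<in> J) \<longrightarrow>
            rad_avg m (\<lambda>n. Ts n (xs n)) \<le> K\<^sup>2 * rad_avg m xs)"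

definition R_sect_cond :: "'a::complex_normed_vector set \<Rightarrow> ('a \<Rightarrow> 'a) \<Rightarrow> real \<Rightarrow> bool" where
  "R_sect_cond DT T \<sigma> \<longleftrightarrow> sect_angle DT T < \<sigma> \<and> \<sigma> < pi \<and>
     R_bounded {(\<lambda>x. cscale l (resolvent DT T l x)) | l. l \<in> - closure (sector \<sigma>)}"

definition R_sectorial :: "'a::complex_normed_vector set \<Rightarrow> ('a \<Rightarrow> 'a) \<Rightarrow> bool" where
  "R_sectorial DT T \<longleftrightarrow> sectorial DT T \<and> (\<exists>\<sigma>. R_sect_cond DT T \<sigma>)"

definition R_angle :: "'a::complex_normed_vector set \<Rightarrow> ('a \<Rightarrow> 'a) \<Rightarrow> real" where
  "R_angle DT T = Inf {\<sigma>. R_sect_cond DT T \<sigma>}"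

definition R_sectorial_of_angle :: "'a::complex_normed_vector set \<Rightarrow> ('a \<Rightarrow> 'a) \<Rightarrow> real \<Rightarrow> bool" where
  "R_sectorial_of_angle DT T \<psi> \<longleftrightarrow> R_sectorial DT T \<and> R_angle DT T \<le> \<psi>"

text \<open>X is reflexive: the canonical embedding of X into its bidual X'' is onto, i.e. every
  bounded linear functional Phi on the dual X' is evaluation at some x.\<close>
definition reflexive_space :: "'a::complex_normed_vector itself \<Rightarrow> bool" where
  "reflexive_space (_::'a itself) \<longleftrightarrow>
     (\<forall>\<Phi> :: ('a \<Rightarrow> complex) \<Rightarrow> complex.
        ((\<forall>f g. bounded_clinear f \<longrightarrow> bounded_clinear g \<longrightarrow> \<Phi> (\<lambda>x. f x + g x) = \<Phi> f + \<Phi> g) \<and>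
         (\<forall>c f. bounded_clinear f \<longrightarrow> \<Phi> (\<lambda>x. c * f x) = c * \<Phi> f) \<and>
         (\<exists>K. \<forall>f. bounded_clinear f \<longrightarrow> cmod (\<Phi> f) \<le> K * onorm f))
        \<longrightarrow> (\<exists>x. \<forall>f. bounded_clinear f \<longrightarrow> \<Phi> f = f x))"

definition block_op :: "('a \<Rightarrow> 'a) \<Rightarrow> ('b \<Rightarrow> 'a::plus) \<Rightarrow> ('a \<Rightarrow> 'b) \<Rightarrow> ('b \<Rightarrow> 'b::plus)
                        \<Rightarrow> 'a \<times> 'b \<Rightarrow> 'a \<times> 'b" where
  "block_op A B C D z = (A (fst z) + B (snd z), C (fst z) + D (snd z))"

definition M1 :: "'a::complex_normed_vector set \<Rightarrow> ('a \<Rightarrow> 'a) \<Rightarrow> ('b \<Rightarrow> 'a) \<Rightarrow> ('a \<Rightarrow> 'b)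
                  \<Rightarrow> 'b::complex_normed_vector set \<Rightarrow> ('b \<Rightarrow> 'b) \<Rightarrow> complex \<Rightarrow> 'a \<Rightarrow> 'a" where
  "M1 DA A B C DD D l = (\<lambda>x. x - B (resolvent DD D l (C (resolvent DA A l x))))"

definition M2 :: "'a::complex_normed_vector set \<Rightarrow> ('a \<Rightarrow> 'a) \<Rightarrow> ('b \<Rightarrow> 'a) \<Rightarrow> ('a \<Rightarrow> 'b)
                  \<Rightarrow> 'b::complex_normed_vector set \<Rightarrow> ('b \<Rightarrow> 'b) \<Rightarrow> complex \<Rightarrow> 'b \<Rightarrow> 'b" where
  "M2 DA A B C DD D l = (\<lambda>y. y - C (resolvent DA A l (B (resolvent DD D l y))))"

definition invertible_bdd :: "('a::complex_normed_vector \<Rightarrow> 'a) \<Rightarrow> bool" where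
  "invertible_bdd f \<longleftrightarrow> bij f \<and> bounded_clinear (inv f)"

definition M_cond :: "real \<Rightarrow> (complex \<Rightarrow> 'a::complex_normed_vector \<Rightarrow> 'a) \<Rightarrow> bool" where
  "M_cond \<psi> M \<longleftrightarrow> (\<forall>\<phi>. \<psi> < \<phi> \<and> \<phi> < pi \<longrightarrow>
     (\<forall>l \<in> - closure (sector \<phi>). invertible_bdd (M l)) \<and>
     (\<exists>K. \<forall>l \<in> - closure (sector \<phi>). onorm (inv (M l)) \<le> K))"

definition M_R_cond :: "real \<Rightarrow> (complex \<Rightarrow> 'a::complex_normed_vector \<Rightarrow> 'a) \<Rightarrow> bool" where
  "M_R_cond \<psi> M \<longleftrightarrow> (\<forall>\<phi>. \<psi> < \<phi> \<and> \<phi> < pi \<longrightarrow>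
     (\<forall>l \<in> - closure (sector \<phi>). invertible_bdd (M l)) \<and>
     R_bounded {inv (M l) | l. l \<in> - closure (sector \<phi>)})"

end

theory Submission
  imports Defs
begin

lemma cscale_zero_right[simp]: "cscale c (0::'a::complex_vector) = 0"
  by (metis add_cancel_right_right cscale_add_right)

lemma cscale_zero_left[simp]: "cscale 0 (x::'a::complex_vector) = 0"
  by (metis scaleR_cscale scaleR_zero_left of_real_0)

lemma cscale_minus_right: "cscale c (- (x::'a::complex_vector)) = - cscale c x"
  by (metis add_eq_0_iff cscale_add_right cscale_zero_right)

lemma cscale_diff_right: "cscale c ((x::'a::complex_vector) - y) = cscale c x - cscale c y"
  by (metis cscale_add_right cscale_minus_right diff_conv_add_uminus)

lemma cscale_minus_left: "cscale (- c) (x::'a::complex_vector) = - cscale c x"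
  by (metis add_eq_0_iff cscale_add_left cscale_zero_left neg_eq_iff_add_eq_0)

lemma cscale_diff_left: "cscale (c - d) (x::'a::complex_vector) = cscale c x - cscale d x"
  by (metis cscale_add_left cscale_minus_left diff_conv_add_uminus)

lemma cscale_scaleR: "cscale c (r *\<^sub>R (x::'a::complex_vector)) = r *\<^sub>R cscale c x"
  by (simp add: scaleR_cscale cscale_cscale mult.commute)

lemma cscale_of_real: "cscale (complex_of_real r) (x::'a::complex_vector) = r *\<^sub>R x"
  by (simp add: scaleR_cscale)

lemma cscale_sum_right: "cscale c (\<Sum>n\<in>I. (f n::'a::complex_vector)) = (\<Sum>n\<in>I. cscale c (f n))"
  by (induction I rule: infinite_finite_induct) (auto simp: cscale_add_right)

lemma bounded_linear_cscale: "bounded_linear (cscale c :: 'a::complex_normed_vector \<Rightarrow> 'a)"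
  by (rule bounded_linear_intro[where K="cmod c"])
     (auto simp: cscale_add_right cscale_scaleR norm_cscale mult.commute)

lemma bounded_clinear_intro:
  fixes f :: "'a::complex_normed_vector \<Rightarrow> 'b::complex_normed_vector"
  assumes "\<And>x y. f (x + y) = f x + f y" "\<And>c x. f (cscale c x) = cscale c (f x)"
    "\<And>x. norm (f x) \<le> K * norm x"
  shows "bounded_clinear f"
  unfolding bounded_clinear_def
proof (intro conjI allI)
  show "bounded_linear f"
    by (rule bounded_linear_intro[where K=K]) (auto simp: assms scaleR_cscale mult.commute)
qed (use assms in auto)

lemma bounded_clinear_bl: "bounded_clinear f \<Longrightarrow> bounded_linear f"
  by (simp add: bounded_clinear_def)

lemma bounded_clinear_cscale: "bounded_clinear f \<Longrightarrow> f (cscale c x) = cscale c (f x)"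
  by (simp add: bounded_clinear_def)

lemma bounded_clinear_add: "bounded_clinear f \<Longrightarrow> f (x + y) = f x + f y"
  by (simp add: bounded_clinear_def linear_simps)

lemma bounded_clinear_diff: "bounded_clinear f \<Longrightarrow> f (x - y) = f x - f y"
  by (simp add: bounded_clinear_def linear_simps)

lemma bounded_clinear_zero: "bounded_clinear f \<Longrightarrow> f 0 = 0"
  by (simp add: bounded_clinear_def linear_simps)

lemma bounded_clinear_scaleR: "bounded_clinear f \<Longrightarrow> f (r *\<^sub>R x) = r *\<^sub>R f x"
  by (simp add: bounded_clinear_def linear_simps)

lemma bounded_clinear_sum: "bounded_clinear f \<Longrightarrow> f (\<Sum>n\<in>I. g n) = (\<Sum>n\<in>I. f (g n))"
  by (induction I rule: infinite_finite_induct) (auto simp: bounded_clinear_add bounded_clinear_zero)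

lemma bounded_clinear_norm: "bounded_clinear f \<Longrightarrow> norm (f x) \<le> onorm f * norm x"
  by (simp add: bounded_clinear_def onorm)

lemma bounded_clinear_norm_ex: "bounded_clinear f \<Longrightarrow> \<exists>K\<ge>0. \<forall>x. norm (f x) \<le> K * norm x"
  by (meson bounded_clinear_bl bounded_clinear_norm onorm_pos_le)

lemma bounded_clinear_compose: "bounded_clinear f \<Longrightarrow> bounded_clinear g \<Longrightarrow> bounded_clinear (\<lambda>x. f (g x))"
  unfolding bounded_clinear_def using bounded_linear_compose by auto

lemma bounded_clinear_ident: "bounded_clinear (\<lambda>x. x)"
  unfolding bounded_clinear_def by (simp add: bounded_linear_ident)

lemma bounded_clinear_plus: "bounded_clinear f \<Longrightarrow> bounded_clinear g \<Longrightarrow> bounded_clinear (\<lambda>x. f x + g x)"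
  unfolding bounded_clinear_def using bounded_linear_add by (auto simp: cscale_add_right)

lemma bounded_clinear_minus: "bounded_clinear f \<Longrightarrow> bounded_clinear g \<Longrightarrow> bounded_clinear (\<lambda>x. f x - g x)"
  unfolding bounded_clinear_def using bounded_linear_sub by (auto simp: cscale_diff_right)

lemma bounded_clinear_cscale_fun: "bounded_clinear f \<Longrightarrow> bounded_clinear (\<lambda>x. cscale c (f x))"
  unfolding bounded_clinear_def
  using bounded_linear_compose[OF bounded_linear_cscale[of c]]
  by (auto simp: cscale_cscale mult.commute)

lemma bounded_clinear_fst: "bounded_clinear fst"
  unfolding bounded_clinear_def by (simp add: bounded_linear_fst cscale_prod_def)

lemma bounded_clinear_snd: "bounded_clinear snd"
  unfolding bounded_clinear_def by (simp add: bounded_linear_snd cscale_prod_def)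

lemma bounded_clinear_Pair: "bounded_clinear f \<Longrightarrow> bounded_clinear g \<Longrightarrow> bounded_clinear (\<lambda>x. (f x, g x))"
  unfolding bounded_clinear_def by (simp add: bounded_linear_Pair cscale_prod_def)

context
  fixes DT :: "'a::complex_vector set" and T :: "'a \<Rightarrow> 'b::complex_vector"
  assumes cl: "clinear_on DT T"
begin

lemma cl_zero_in: "0 \<in> DT" using cl by (simp add: clinear_on_def)
lemma cl_add_in: "x \<in> DT \<Longrightarrow> y \<in> DT \<Longrightarrow> x + y \<in> DT" using cl by (simp add: clinear_on_def)
lemma cl_add: "x \<in> DT \<Longrightarrow> y \<in> DT \<Longrightarrow> T (x + y) = T x + T y" using cl by (simp add: clinear_on_def)
lemma cl_cscale_in: "x \<in> DT \<Longrightarrow> cscale c x \<in> DT" using cl by (simp add: clinear_on_def)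
lemma cl_cscale: "x \<in> DT \<Longrightarrow> T (cscale c x) = cscale c (T x)" using cl by (simp add: clinear_on_def)
lemma cl_zero: "T 0 = 0"
  using cl_cscale[OF cl_zero_in, of 0] by simp
lemma cl_scaleR_in: "x \<in> DT \<Longrightarrow> r *\<^sub>R x \<in> DT" by (simp add: scaleR_cscale cl_cscale_in)
lemma cl_scaleR: "x \<in> DT \<Longrightarrow> T (r *\<^sub>R x) = r *\<^sub>R T x" by (simp add: scaleR_cscale cl_cscale)
lemma cl_minus_in: "x \<in> DT \<Longrightarrow> - x \<in> DT" using cl_scaleR_in[of x "-1"] by simp
lemma cl_minus: "x \<in> DT \<Longrightarrow> T (- x) = - T x" using cl_scaleR[of x "-1"] by simp
lemma cl_diff_in: "x \<in> DT \<Longrightarrow> y \<in> DT \<Longrightarrow> x - y \<in> DT"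
  by (metis cl_add_in cl_minus_in diff_conv_add_uminus)
lemma cl_diff: "x \<in> DT \<Longrightarrow> y \<in> DT \<Longrightarrow> T (x - y) = T x - T y"
  by (metis cl_add cl_minus cl_minus_in diff_conv_add_uminus)

lemma cl_sum:
  assumes "\<forall>n\<in>I. x n \<in> DT"
  shows "(\<Sum>n\<in>I. x n) \<in> DT \<and> T (\<Sum>n\<in>I. x n) = (\<Sum>n\<in>I. T (x n))"
  using assms
  by (induction I rule: infinite_finite_induct) (auto simp: cl_zero_in cl_zero cl_add_in cl_add)

lemma cl_rsum:
  assumes "\<forall>n<m. x n \<in> DT"
  shows "(\<Sum>n<m. e n *\<^sub>R x n) \<in> DT \<and> T (\<Sum>n<m. e n *\<^sub>R x n) = (\<Sum>n<m. e n *\<^sub>R T (x n))"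
  using cl_sum[of "{..<m}" "\<lambda>n. e n *\<^sub>R x n"] assms by (simp add: cl_scaleR_in cl_scaleR)

end

lemma clinear_on_prod:
  assumes "clinear_on DA A" "clinear_on DD D"
  shows "clinear_on (DA \<times> DD) (\<lambda>z. (A (fst z), D (snd z)))"
  using assms unfolding clinear_on_def by (auto simp: cscale_prod_def zero_prod_def)

context
  fixes DT :: "'a::complex_normed_vector set" and T :: "'a \<Rightarrow> 'a" and l :: complex
  assumes rs: "l \<in> resolvent_set DT T"
begin

lemma rs_bij: "bij_betw (\<lambda>x. cscale l x - T x) DT UNIV"
  using rs by (simp add: resolvent_set_def)

lemma res_bcl: "bounded_clinear (resolvent DT T l)"
  using rs by (simp add: resolvent_set_def)

lemma res_in: "resolvent DT T l x \<in> DT"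
  unfolding resolvent_def using rs_bij unfolding bij_betw_def
  by (intro inv_into_into) simp

lemma res_right: "cscale l (resolvent DT T l x) - T (resolvent DT T l x) = x"
  unfolding resolvent_def using rs_bij unfolding bij_betw_def
  using f_inv_into_f[of x "\<lambda>x. cscale l x - T x" DT] by simp

lemma res_left: "u \<in> DT \<Longrightarrow> resolvent DT T l (cscale l u - T u) = u"
  unfolding resolvent_def using rs_bij unfolding bij_betw_def
  using inv_into_f_f[of "\<lambda>x. cscale l x - T x" DT u] by simp

lemma res_T: "T (resolvent DT T l x) = cscale l (resolvent DT T l x) - x"
  using res_right[of x] by (simp add: algebra_simps)

end

lemma resolvent_eqI:
  assumes "inj_on (\<lambda>x. cscale l x - T x) DT" "u \<in> DT" "cscale l u - T u = x"
  shows "resolvent DT T l x = u"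
  unfolding resolvent_def using assms inv_into_f_eq[of "\<lambda>x. cscale l x - T x" DT u x] by simp

definition SC :: "real \<Rightarrow> complex set" where "SC \<phi> = - closure (sector \<phi>)"

lemma sector_mono: "\<omega> \<le> \<phi> \<Longrightarrow> sector \<omega> \<subseteq> sector \<phi>"
  by (auto simp: sector_def)

lemma SC_mono: "\<omega> \<le> \<phi> \<Longrightarrow> SC \<phi> \<subseteq> SC \<omega>"
  unfolding SC_def using closure_mono[OF sector_mono] by blast

lemma sector_sub: "\<phi> \<le> pi \<Longrightarrow> sector \<phi> \<subseteq> {z. cos \<phi> * cmod z \<le> Re z}"
proof
  fix z assume "z \<in> sector \<phi>" and p: "\<phi> \<le> pi"
  then have z: "z \<noteq> 0" "\<bar>Arg z\<bar> < \<phi>" by (auto simp: sector_def)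
  have re: "Re z = cmod z * cos (Arg z)"
    using cos_Arg[OF z(1)] z(1) by simp
  have c: "cos (Arg z) = cos \<bar>Arg z\<bar>" by (simp add: abs_if)
  have "0 \<le> \<bar>Arg z\<bar>" by simp
  then have "cos \<phi> \<le> cos \<bar>Arg z\<bar>" using z p by (intro cos_monotone_0_pi_le) auto
  then have "cos \<phi> * cmod z \<le> cos \<bar>Arg z\<bar> * cmod z" by (rule mult_right_mono) simp
  moreover have "Re z = cos \<bar>Arg z\<bar> * cmod z" using re c by (simp only: mult.commute)
  ultimately show "z \<in> {z. cos \<phi> * cmod z \<le> Re z}" by simp
qed

lemma closure_sector_sub: "\<phi> \<le> pi \<Longrightarrow> closure (sector \<phi>) \<subseteq> {z. cos \<phi> * cmod z \<le> Re z}"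
proof (rule closure_minimal[OF sector_sub])
  show "closed {z. cos \<phi> * cmod z \<le> Re z}"
    by (intro closed_Collect_le continuous_on_mult continuous_on_const continuous_on_norm_id continuous_on_Re continuous_on_id)
qed

lemma neg_in_SC: "t > 0 \<Longrightarrow> \<phi> < pi \<Longrightarrow> complex_of_real (- t) \<in> SC \<phi>"
proof -
  assume t: "t > 0" and p: "\<phi> < pi"
  show ?thesis
  proof (cases "\<phi> > 0")
    case True
    have "cos \<phi> > -1"
      using True p cos_monotone_0_pi[of \<phi> pi] by simp
    then have "cos \<phi> * t > (-1) * t" using t by (intro mult_strict_right_mono) auto
    then have "\<not> cos \<phi> * t \<le> - t" by simp
    then show ?thesis unfolding SC_def using closure_sector_sub[of \<phi>] t p by auto
  next
    case False
    have "sector \<phi> = {}" using False by (auto simp: sector_def)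
    then show ?thesis by (simp add: SC_def)
  qed
qed


section \<open>Rademacher bounds\<close>

definition Rb :: "(nat \<Rightarrow> (nat \<Rightarrow> 'i) \<Rightarrow> bool) \<Rightarrow> 'i set \<Rightarrow>
    ('i \<Rightarrow> 'x::real_normed_vector \<Rightarrow> 'y::real_normed_vector) \<Rightarrow> real \<Rightarrow> bool" where
  "Rb Q S F K \<longleftrightarrow> (\<forall>m ls xs. Q m ls \<longrightarrow> (\<forall>n<m. ls n \<in> S) \<longrightarrow>
      rad_avg m (\<lambda>n. F (ls n) (xs n)) \<le> K\<^sup>2 * rad_avg m xs)"

definition Qt :: "nat \<Rightarrow> (nat \<Rightarrow> 'i) \<Rightarrow> bool" where "Qt m ls = True"
definition Qc :: "nat \<Rightarrow> (nat \<Rightarrow> 'i) \<Rightarrow> bool" where "Qc m ls = (\<forall>n<m. ls n = ls 0)"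

lemma rad_avg_nonneg: "0 \<le> rad_avg m x"
  unfolding rad_avg_def by (intro divide_nonneg_pos sum_nonneg) auto

lemma rad_avg_cong: "(\<And>n. n < m \<Longrightarrow> y n = z n) \<Longrightarrow> rad_avg m y = rad_avg m z"
  unfolding rad_avg_def by (intro arg_cong2[where f="(/)"] sum.cong refl) auto

lemma rad_avg_cmp:
  assumes "\<And>\<epsilon>. norm (\<Sum>n<m. \<epsilon> n *\<^sub>R y n) \<le> c * norm (\<Sum>n<m. \<epsilon> n *\<^sub>R z n)" "0 \<le> c"
  shows "rad_avg m y \<le> c\<^sup>2 * rad_avg m z"
proof -
  have "(\<Sum>\<epsilon> \<in> PiE {..<m} (\<lambda>_. {-1, 1::real}). (norm (\<Sum>n<m. \<epsilon> n *\<^sub>R y n))\<^sup>2)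
      \<le> (\<Sum>\<epsilon> \<in> PiE {..<m} (\<lambda>_. {-1, 1::real}). c\<^sup>2 * (norm (\<Sum>n<m. \<epsilon> n *\<^sub>R z n))\<^sup>2)"
  proof (rule sum_mono)
    fix \<epsilon> :: "nat \<Rightarrow> real"
    have "(norm (\<Sum>n<m. \<epsilon> n *\<^sub>R y n))\<^sup>2 \<le> (c * norm (\<Sum>n<m. \<epsilon> n *\<^sub>R z n))\<^sup>2"
      by (rule power_mono[OF assms(1)]) simp
    then show "(norm (\<Sum>n<m. \<epsilon> n *\<^sub>R y n))\<^sup>2 \<le> c\<^sup>2 * (norm (\<Sum>n<m. \<epsilon> n *\<^sub>R z n))\<^sup>2"
      by (simp add: power_mult_distrib)
  qed
  then have "(\<Sum>\<epsilon> \<in> PiE {..<m} (\<lambda>_. {-1, 1::real}). (norm (\<Sum>n<m. \<epsilon> n *\<^sub>R y n))\<^sup>2) / 2 ^ m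
      \<le> (c\<^sup>2 * (\<Sum>\<epsilon> \<in> PiE {..<m} (\<lambda>_. {-1, 1::real}). (norm (\<Sum>n<m. \<epsilon> n *\<^sub>R z n))\<^sup>2)) / 2 ^ m"
    by (simp add: sum_distrib_left[symmetric] divide_right_mono)
  then show ?thesis unfolding rad_avg_def by simp
qed

lemma sq2: "(x + y)\<^sup>2 \<le> 2 * x\<^sup>2 + 2 * (y::real)\<^sup>2"
proof -
  have "0 \<le> (x - y)\<^sup>2" by simp
  then show ?thesis by (simp add: power2_sum power2_diff)
qed

lemma rad_avg_add_le: "rad_avg m (\<lambda>n. y n + z n) \<le> 2 * rad_avg m y + 2 * rad_avg m z"
proof -
  have "(\<Sum>\<epsilon> \<in> PiE {..<m} (\<lambda>_. {-1, 1::real}). (norm (\<Sum>n<m. \<epsilon> n *\<^sub>R (y n + z n)))\<^sup>2)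
      \<le> (\<Sum>\<epsilon> \<in> PiE {..<m} (\<lambda>_. {-1, 1::real}). 2 * (norm (\<Sum>n<m. \<epsilon> n *\<^sub>R y n))\<^sup>2
             + 2 * (norm (\<Sum>n<m. \<epsilon> n *\<^sub>R z n))\<^sup>2)"
  proof (rule sum_mono)
    fix \<epsilon> :: "nat \<Rightarrow> real"
    let ?a = "(\<Sum>n<m. \<epsilon> n *\<^sub>R y n)" and ?b = "(\<Sum>n<m. \<epsilon> n *\<^sub>R z n)"
    have e: "(\<Sum>n<m. \<epsilon> n *\<^sub>R (y n + z n)) = ?a + ?b"
      by (simp add: scaleR_add_right sum.distrib)
    have "norm (?a + ?b) \<le> norm ?a + norm ?b" by (rule norm_triangle_ineq)
    then have "(norm (?a + ?b))\<^sup>2 \<le> (norm ?a + norm ?b)\<^sup>2" by (simp add: power_mono)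
    also have "\<dots> \<le> 2 * (norm ?a)\<^sup>2 + 2 * (norm ?b)\<^sup>2"
      using sq2[of "norm ?a" "norm ?b"] by simp
    finally show "(norm (\<Sum>n<m. \<epsilon> n *\<^sub>R (y n + z n)))\<^sup>2 \<le> 2 * (norm ?a)\<^sup>2 + 2 * (norm ?b)\<^sup>2"
      by (simp only: e)
  qed
  also have "\<dots> = 2 * (\<Sum>\<epsilon> \<in> PiE {..<m} (\<lambda>_. {-1, 1::real}). (norm (\<Sum>n<m. \<epsilon> n *\<^sub>R y n))\<^sup>2)
      + 2 * (\<Sum>\<epsilon> \<in> PiE {..<m} (\<lambda>_. {-1, 1::real}). (norm (\<Sum>n<m. \<epsilon> n *\<^sub>R z n))\<^sup>2)"
    by (simp add: sum.distrib sum_distrib_left)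
  finally have "(\<Sum>\<epsilon> \<in> PiE {..<m} (\<lambda>_. {-1, 1::real}). (norm (\<Sum>n<m. \<epsilon> n *\<^sub>R (y n + z n)))\<^sup>2) / 2 ^ m
     \<le> (2 * (\<Sum>\<epsilon> \<in> PiE {..<m} (\<lambda>_. {-1, 1::real}). (norm (\<Sum>n<m. \<epsilon> n *\<^sub>R y n))\<^sup>2)
      + 2 * (\<Sum>\<epsilon> \<in> PiE {..<m} (\<lambda>_. {-1, 1::real}). (norm (\<Sum>n<m. \<epsilon> n *\<^sub>R z n))\<^sup>2)) / 2 ^ m"
    by (rule divide_right_mono) simp
  then show ?thesis unfolding rad_avg_def
    by (simp only: add_divide_distrib times_divide_eq_right)
qed

lemma rad_avg_pair: "rad_avg m (\<lambda>n. (y n, z n)) = rad_avg m y + rad_avg m z"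
proof -
  have "(norm (\<Sum>n<m. \<epsilon> n *\<^sub>R (y n, z n)))\<^sup>2
        = (norm (\<Sum>n<m. \<epsilon> n *\<^sub>R y n))\<^sup>2 + (norm (\<Sum>n<m. \<epsilon> n *\<^sub>R z n))\<^sup>2" for \<epsilon> :: "nat \<Rightarrow> real"
  proof -
    have "(\<Sum>n<m. \<epsilon> n *\<^sub>R (y n, z n)) = ((\<Sum>n<m. \<epsilon> n *\<^sub>R y n), (\<Sum>n<m. \<epsilon> n *\<^sub>R z n))"
      by (simp add: prod_eq_iff fst_sum snd_sum)
    then show ?thesis by (simp add: norm_Pair)
  qed
  then show ?thesis unfolding rad_avg_def
    by (simp add: sum.distrib add_divide_distrib)
qed

lemma rad_avg_one: "rad_avg 1 y = (norm (y 0))\<^sup>2"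
proof -
  have c: "card (PiE {..<1::nat} (\<lambda>_. {-1, 1::real})) = 2"
    by (simp add: card_PiE)
  have "(norm (\<Sum>n<1. \<epsilon> n *\<^sub>R y n))\<^sup>2 = (norm (y 0))\<^sup>2"
    if "\<epsilon> \<in> PiE {..<1::nat} (\<lambda>_. {-1, 1::real})" for \<epsilon>
  proof -
    have "\<epsilon> 0 = -1 \<or> \<epsilon> 0 = 1" using that by (auto simp: PiE_iff)
    then show ?thesis by auto
  qed
  then have "(\<Sum>\<epsilon> \<in> PiE {..<1::nat} (\<lambda>_. {-1, 1::real}). (norm (\<Sum>n<1. \<epsilon> n *\<^sub>R y n))\<^sup>2)
       = (\<Sum>\<epsilon> \<in> PiE {..<1::nat} (\<lambda>_. {-1, 1::real}). (norm (y 0))\<^sup>2)"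
    by (rule sum.cong[OF refl])
  also have "\<dots> = 2 * (norm (y 0))\<^sup>2" using c by simp
  finally have "(\<Sum>\<epsilon> \<in> PiE {..<1::nat} (\<lambda>_. {-1, 1::real}). (norm (\<Sum>n<1. \<epsilon> n *\<^sub>R y n))\<^sup>2)
       = 2 * (norm (y 0))\<^sup>2" .
  then show ?thesis unfolding rad_avg_def by simp
qed

lemma Rb_cmp:
  assumes "\<And>m ls xs \<epsilon>. Q m ls \<Longrightarrow> (\<forall>n<m. ls n \<in> S) \<Longrightarrow>
      norm (\<Sum>n<m. \<epsilon> n *\<^sub>R F (ls n) (xs n)) \<le> c * norm (\<Sum>n<m. \<epsilon> n *\<^sub>R G (ls n) (xs n))"
    and "0 \<le> c" and "Rb Q S G K"
  shows "Rb Q S F (c * K)"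
  unfolding Rb_def
proof (intro allI impI)
  fix m ls xs assume q: "Q m ls" "\<forall>n<m. ls n \<in> S"
  have "rad_avg m (\<lambda>n. F (ls n) (xs n)) \<le> c\<^sup>2 * rad_avg m (\<lambda>n. G (ls n) (xs n))"
    by (rule rad_avg_cmp[OF assms(1)[OF q] assms(2)])
  also have "\<dots> \<le> c\<^sup>2 * (K\<^sup>2 * rad_avg m xs)"
    using assms(3) q unfolding Rb_def by (intro mult_left_mono) auto
  finally show "rad_avg m (\<lambda>n. F (ls n) (xs n)) \<le> (c * K)\<^sup>2 * rad_avg m xs"
    by (simp add: power_mult_distrib)
qed

lemma Rb_add:
  assumes "Rb Q S F K1" "Rb Q S G K2"
  shows "Rb Q S (\<lambda>l x. F l x + G l x) (sqrt (2 * K1\<^sup>2 + 2 * K2\<^sup>2))"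
  unfolding Rb_def
proof (intro allI impI)
  fix m ls xs assume q: "Q m ls" "\<forall>n<m. ls n \<in> S"
  have "rad_avg m (\<lambda>n. F (ls n) (xs n) + G (ls n) (xs n))
     \<le> 2 * rad_avg m (\<lambda>n. F (ls n) (xs n)) + 2 * rad_avg m (\<lambda>n. G (ls n) (xs n))"
    by (rule rad_avg_add_le)
  also have "\<dots> \<le> 2 * (K1\<^sup>2 * rad_avg m xs) + 2 * (K2\<^sup>2 * rad_avg m xs)"
    using assms q unfolding Rb_def by (intro add_mono mult_left_mono) auto
  also have "\<dots> = (sqrt (2 * K1\<^sup>2 + 2 * K2\<^sup>2))\<^sup>2 * rad_avg m xs"
    by (simp add: algebra_simps)
  finally show "rad_avg m (\<lambda>n. F (ls n) (xs n) + G (ls n) (xs n)) \<le> (sqrt (2 * K1\<^sup>2 + 2 * K2\<^sup>2))\<^sup>2 * rad_avg m xs" .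
qed

lemma Rb_comp:
  assumes "Rb Q S F K1" "Rb Q S G K2"
  shows "Rb Q S (\<lambda>l x. F l (G l x)) (K1 * K2)"
  unfolding Rb_def
proof (intro allI impI)
  fix m ls xs assume q: "Q m ls" "\<forall>n<m. ls n \<in> S"
  have "rad_avg m (\<lambda>n. F (ls n) (G (ls n) (xs n))) \<le> K1\<^sup>2 * rad_avg m (\<lambda>n. G (ls n) (xs n))"
    using assms(1) q unfolding Rb_def by auto
  also have "\<dots> \<le> K1\<^sup>2 * (K2\<^sup>2 * rad_avg m xs)"
    using assms(2) q unfolding Rb_def by (intro mult_left_mono) auto
  finally show "rad_avg m (\<lambda>n. F (ls n) (G (ls n) (xs n))) \<le> (K1 * K2)\<^sup>2 * rad_avg m xs"
    by (simp add: power_mult_distrib)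
qed

lemma Rb_pair:
  assumes "Rb Q S F K1" "Rb Q S G K2"
  shows "Rb Q S (\<lambda>l x. (F l x, G l x)) (sqrt (K1\<^sup>2 + K2\<^sup>2))"
  unfolding Rb_def
proof (intro allI impI)
  fix m ls xs assume q: "Q m ls" "\<forall>n<m. ls n \<in> S"
  have "rad_avg m (\<lambda>n. (F (ls n) (xs n), G (ls n) (xs n)))
      = rad_avg m (\<lambda>n. F (ls n) (xs n)) + rad_avg m (\<lambda>n. G (ls n) (xs n))"
    by (rule rad_avg_pair)
  also have "\<dots> \<le> K1\<^sup>2 * rad_avg m xs + K2\<^sup>2 * rad_avg m xs"
    using assms q unfolding Rb_def by (intro add_mono) auto
  finally show "rad_avg m (\<lambda>n. (F (ls n) (xs n), G (ls n) (xs n))) \<le> (sqrt (K1\<^sup>2 + K2\<^sup>2))\<^sup>2 * rad_avg m xs"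
    by (simp add: algebra_simps)
qed

lemma Rb_id: "Rb Q S (\<lambda>l x. x) 1"
  unfolding Rb_def by simp

lemma Rb_const:
  assumes "bounded_linear T"
  shows "Rb Q S (\<lambda>l. T) (onorm T)"
proof -
  have "Rb Q S (\<lambda>l. T) (onorm T * 1)"
  proof (rule Rb_cmp[OF _ _ Rb_id])
    fix m ls xs \<epsilon>
    have "(\<Sum>n<m. \<epsilon> n *\<^sub>R T (xs n)) = T (\<Sum>n<m. \<epsilon> n *\<^sub>R xs n)"
      using assms by (simp add: linear_sum[OF bounded_linear.linear] linear_scale[OF bounded_linear.linear])
    then show "norm (\<Sum>n<m. \<epsilon> n *\<^sub>R T (xs n)) \<le> onorm T * norm (\<Sum>n<m. \<epsilon> n *\<^sub>R xs n)"
      using onorm[OF assms] by simp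
  qed (use onorm_pos_le[OF assms] in auto)
  then show ?thesis by simp
qed

lemma Rb_mono:
  assumes "S' \<subseteq> S" "Rb Q S F K" shows "Rb Q S' F K"
  unfolding Rb_def
proof (intro allI impI)
  fix m ls xs assume q: "Q m ls" "\<forall>n<m. ls n \<in> S'"
  then have "\<forall>n<m. ls n \<in> S" using assms(1) by blast
  then show "rad_avg m (\<lambda>n. F (ls n) (xs n)) \<le> K\<^sup>2 * rad_avg m xs"
    using assms(2)[unfolded Rb_def, rule_format, of m ls xs] q by simp
qed

lemma Rb_cong:
  assumes e: "\<And>l x. l \<in> S \<Longrightarrow> F l x = G l x" and r: "Rb Q S F K"
  shows "Rb Q S G K"
  unfolding Rb_def
proof (intro allI impI)
  fix m ls xs
  assume q: "Q m ls" "\<forall>n<m. ls n \<in> S"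
  have "rad_avg m (\<lambda>n. G (ls n) (xs n)) = rad_avg m (\<lambda>n. F (ls n) (xs n))"
    using e q by (intro rad_avg_cong) auto
  then show "rad_avg m (\<lambda>n. G (ls n) (xs n)) \<le> K\<^sup>2 * rad_avg m xs"
    using r[unfolded Rb_def, rule_format, of m ls xs] q by simp
qed

lemma Rb_Qt_Qc:
  assumes "Rb Qt S F K" shows "Rb Qc S F K"
  unfolding Rb_def
proof (intro allI impI)
  fix m ls xs assume q: "Qc m ls" "\<forall>n<m. ls n \<in> S"
  then show "rad_avg m (\<lambda>n. F (ls n) (xs n)) \<le> K\<^sup>2 * rad_avg m xs"
    using assms[unfolded Rb_def Qt_def, rule_format, of m ls xs] q by simp
qed

lemma Rb_Qc_bound:
  assumes "Rb Qc S F K" "l \<in> S"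
  shows "norm (F l x) \<le> \<bar>K\<bar> * norm x"
proof -
  have "rad_avg 1 (\<lambda>n. F ((\<lambda>_. l) n) ((\<lambda>_. x) n)) \<le> K\<^sup>2 * rad_avg 1 (\<lambda>_. x)"
    using assms(1)[unfolded Rb_def Qc_def, rule_format, of 1 "\<lambda>_. l" "\<lambda>_. x"] assms(2) by simp
  then have "(norm (F l x))\<^sup>2 \<le> (\<bar>K\<bar> * norm x)\<^sup>2"
    unfolding rad_avg_one by (simp add: power_mult_distrib)
  then show ?thesis
    by (rule power2_le_imp_le) simp
qed

lemma Rb_Qc_intro:
  assumes "\<And>l. l \<in> S \<Longrightarrow> bounded_linear (F l)" "\<And>l x. l \<in> S \<Longrightarrow> norm (F l x) \<le> K * norm x" "0 \<le> K"
  shows "Rb Qc S F K"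
  unfolding Rb_def
proof (intro allI impI)
  fix m ls xs assume q: "Qc m ls" "\<forall>n<m. ls n \<in> S"
  show "rad_avg m (\<lambda>n. F (ls n) (xs n)) \<le> K\<^sup>2 * rad_avg m xs"
  proof (cases "m = 0")
    case True
    then show ?thesis by (simp add: rad_avg_def)
  next
    case False
    then have l0: "ls 0 \<in> S" using q by auto
    have e: "rad_avg m (\<lambda>n. F (ls n) (xs n)) = rad_avg m (\<lambda>n. F (ls 0) (xs n))"
    proof (rule rad_avg_cong)
      fix n assume "n < m"
      then have "ls n = ls 0" using q(1) unfolding Qc_def by blast
      then show "F (ls n) (xs n) = F (ls 0) (xs n)" by (rule arg_cong)
    qed
    have "rad_avg m (\<lambda>n. F (ls 0) (xs n)) \<le> K\<^sup>2 * rad_avg m xs"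
    proof (rule rad_avg_cmp[OF _ assms(3)])
      fix \<epsilon> :: "nat \<Rightarrow> real"
      have eq: "(\<Sum>n<m. \<epsilon> n *\<^sub>R F (ls 0) (xs n)) = F (ls 0) (\<Sum>n<m. \<epsilon> n *\<^sub>R xs n)"
        by (simp only: linear_sum[OF bounded_linear.linear[OF assms(1)[OF l0]]] linear_scale[OF bounded_linear.linear[OF assms(1)[OF l0]]])
      show "norm (\<Sum>n<m. \<epsilon> n *\<^sub>R F (ls 0) (xs n)) \<le> K * norm (\<Sum>n<m. \<epsilon> n *\<^sub>R xs n)"
        unfolding eq by (rule assms(2)[OF l0])
    qed
    then show ?thesis using e by simp
  qed
qed

lemma R_bounded_iff:
  "R_bounded {F l | l. l \<in> S} \<longleftrightarrow> (\<forall>l\<in>S. bounded_clinear (F l)) \<and> (\<exists>K. Rb Qt S F K)"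
proof
  assume a: "R_bounded {F l | l. l \<in> S}"
  then obtain K where K: "\<forall>m Ts xs. (\<forall>n<m. Ts n \<in> {F l | l. l \<in> S}) \<longrightarrow>
            rad_avg m (\<lambda>n. Ts n (xs n)) \<le> K\<^sup>2 * rad_avg m xs"
    unfolding R_bounded_def by blast
  have "Rb Qt S F K"
    unfolding Rb_def
  proof (intro allI impI)
    fix m ls xs assume "Qt m ls" "\<forall>n<m. ls n \<in> S"
    then show "rad_avg m (\<lambda>n. F (ls n) (xs n)) \<le> K\<^sup>2 * rad_avg m xs"
      using K[rule_format, of m "\<lambda>n. F (ls n)" xs] by blast
  qed
  moreover have "\<forall>l\<in>S. bounded_clinear (F l)"
  proof
    fix l assume "l \<in> S"
    then have "F l \<in> {F l | l. l \<in> S}" by blast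
    then show "bounded_clinear (F l)" using a unfolding R_bounded_def by blast
  qed
  ultimately show "(\<forall>l\<in>S. bounded_clinear (F l)) \<and> (\<exists>K. Rb Qt S F K)" by blast
next
  assume a: "(\<forall>l\<in>S. bounded_clinear (F l)) \<and> (\<exists>K. Rb Qt S F K)"
  then obtain K where K: "Rb Qt S F K" by blast
  have "rad_avg m (\<lambda>n. Ts n (xs n)) \<le> K\<^sup>2 * rad_avg m xs"
    if t: "\<forall>n<m. Ts n \<in> {F l | l. l \<in> S}" for m Ts xs
  proof -
    define ls where "ls n = (SOME l. l \<in> S \<and> Ts n = F l)" for n
    have ls: "ls n \<in> S \<and> Ts n = F (ls n)" if "n < m" for n
    proof -
      have "\<exists>l. l \<in> S \<and> Ts n = F l" using t that by blast
      then show ?thesis unfolding ls_def by (rule someI_ex)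
    qed
    have "rad_avg m (\<lambda>n. Ts n (xs n)) = rad_avg m (\<lambda>n. F (ls n) (xs n))"
      using ls by (intro rad_avg_cong) auto
    also have "\<dots> \<le> K\<^sup>2 * rad_avg m xs"
    proof -
      have "\<forall>n<m. ls n \<in> S" using ls by blast
      then show ?thesis using K[unfolded Rb_def Qt_def, rule_format, of m ls xs] by simp
    qed
    finally show ?thesis .
  qed
  moreover have "\<forall>T\<in>{F l | l. l \<in> S}. bounded_clinear T" using a by blast
  ultimately show "R_bounded {F l | l. l \<in> S}"
    unfolding R_bounded_def by blast
qed


lemma inv_witness:
  assumes "\<And>x. f (g x) = x" "\<And>x. g (f x) = x"
  shows "bij f" "inv f = g"
proof -
  have a: "f \<circ> g = id" "g \<circ> f = id" using assms by (auto simp: fun_eq_iff)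
  show "bij f" by (rule o_bij[OF a(2) a(1)])
  show "inv f = g" by (rule inv_unique_comp[OF a(1) a(2)])
qed

lemma invertible_bdd_inv:
  assumes "invertible_bdd f"
  shows "f (inv f x) = x" "inv f (f x) = x" "bounded_clinear (inv f)"
proof -
  have b: "bij f" and c: "bounded_clinear (inv f)" using assms unfolding invertible_bdd_def by auto
  show "f (inv f x) = x" using b by (simp add: bij_is_surj surj_f_inv_f)
  show "inv f (f x) = x" using b by (simp add: bij_is_inj inv_f_f)
  show "bounded_clinear (inv f)" by (rule c)
qed

lemma clinear_on_block:
  assumes "clinear_on DA A" "clinear_on DD D" "clinear_on DB B" "DD \<subseteq> DB"
    "clinear_on DC C" "DA \<subseteq> DC"
  shows "clinear_on (DA \<times> DD) (block_op A B C D)"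
proof -
  have sA: "DA \<subseteq> DC" and sD: "DD \<subseteq> DB" using assms by auto
  show ?thesis
    unfolding clinear_on_def block_op_def
  proof (intro conjI ballI allI)
    show "0 \<in> DA \<times> DD" using cl_zero_in[OF assms(1)] cl_zero_in[OF assms(2)] by (simp add: zero_prod_def)
  next
    fix x y assume x: "x \<in> DA \<times> DD" and y: "y \<in> DA \<times> DD"
    then have xs: "fst x \<in> DA" "snd x \<in> DD" "fst x \<in> DC" "snd x \<in> DB"
      and ys: "fst y \<in> DA" "snd y \<in> DD" "fst y \<in> DC" "snd y \<in> DB" using sA sD by auto
    show "x + y \<in> DA \<times> DD" using xs ys cl_add_in[OF assms(1)] cl_add_in[OF assms(2)] by (simp add: mem_Times_iff)
    show "(A (fst (x + y)) + B (snd (x + y)), C (fst (x + y)) + D (snd (x + y))) =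
          (A (fst x) + B (snd x), C (fst x) + D (snd x)) + (A (fst y) + B (snd y), C (fst y) + D (snd y))"
      using xs ys by (simp add: cl_add[OF assms(1)] cl_add[OF assms(2)] cl_add[OF assms(3)] cl_add[OF assms(5)])
  next
    fix c x assume x: "x \<in> DA \<times> DD"
    then have xs: "fst x \<in> DA" "snd x \<in> DD" "fst x \<in> DC" "snd x \<in> DB" using sA sD by auto
    show "cscale c x \<in> DA \<times> DD" using xs cl_cscale_in[OF assms(1)] cl_cscale_in[OF assms(2)]
      by (simp add: cscale_prod_def mem_Times_iff)
    show "(A (fst (cscale c x)) + B (snd (cscale c x)), C (fst (cscale c x)) + D (snd (cscale c x))) =
          cscale c (A (fst x) + B (snd x), C (fst x) + D (snd x))"
      using xs by (simp add: cscale_prod_def cl_cscale[OF assms(1)] cl_cscale[OF assms(2)]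
          cl_cscale[OF assms(3)] cl_cscale[OF assms(5)] cscale_add_right)
  qed
qed

lemma norm_cscale_le:
  fixes R :: "'x::real_normed_vector \<Rightarrow> 'a::complex_normed_vector"
  assumes "\<And>y. norm (R y) \<le> K * norm y"
  shows "norm (cscale l (R y)) \<le> cmod l * K * norm y"
proof -
  have "norm (cscale l (R y)) = cmod l * norm (R y)" by (simp add: norm_cscale)
  also have "\<dots> \<le> cmod l * (K * norm y)" by (rule mult_left_mono[OF assms]) simp
  finally show ?thesis by (simp add: mult.assoc)
qed

lemma rel_bcl:
  assumes clT: "clinear_on DT T" and rs: "l \<in> resolvent_set DT T" and clS: "clinear_on DS S"
    and sub: "DT \<subseteq> DS" and bnd: "\<forall>y\<in>DT. norm (S y) \<le> c * norm (T y)" and c: "c \<ge> 0"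
  shows "bounded_clinear (\<lambda>y. S (resolvent DT T l y))"
proof -
  obtain K where K: "K \<ge> 0" "\<And>y. norm (resolvent DT T l y) \<le> K * norm y"
    using bounded_clinear_norm_ex[OF res_bcl[OF rs]] by blast
  show ?thesis
  proof (rule bounded_clinear_intro[where K="c * (cmod l * K + 1)"])
    fix x y show "S (resolvent DT T l (x + y)) = S (resolvent DT T l x) + S (resolvent DT T l y)"
      using res_in[OF rs] sub by (simp add: bounded_clinear_add[OF res_bcl[OF rs]] cl_add[OF clS] subsetD)
  next
    fix a x show "S (resolvent DT T l (cscale a x)) = cscale a (S (resolvent DT T l x))"
      using res_in[OF rs] sub by (simp add: bounded_clinear_cscale[OF res_bcl[OF rs]] cl_cscale[OF clS] subsetD)
  next
    fix y
    have n1: "norm (cscale l (resolvent DT T l y)) \<le> cmod l * K * norm y"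
      by (rule norm_cscale_le[OF K(2)])
    have n2: "norm (T (resolvent DT T l y)) \<le> cmod l * K * norm y + norm y"
      using norm_triangle_ineq4[of "cscale l (resolvent DT T l y)" y] n1 unfolding res_T[OF rs] by linarith
    have "norm (S (resolvent DT T l y)) \<le> c * norm (T (resolvent DT T l y))"
      using bnd res_in[OF rs] by blast
    also have "\<dots> \<le> c * (cmod l * K * norm y + norm y)"
      by (rule mult_left_mono[OF n2 c])
    finally show "norm (S (resolvent DT T l y)) \<le> c * (cmod l * K + 1) * norm y"
      by (simp add: algebra_simps)
  qed
qed

locale blk =
  fixes DA :: "'a::complex_normed_vector set" and A :: "'a \<Rightarrow> 'a"
    and DD :: "'b::complex_normed_vector set" and D :: "'b \<Rightarrow> 'b"
    and DB :: "'b set" and B :: "'b \<Rightarrow> 'a" and DC :: "'a set" and C :: "'a \<Rightarrow> 'b"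
    and cA cD KK :: real
  assumes clA: "clinear_on DA A" and clD: "clinear_on DD D" and clB: "clinear_on DB B" and DDB: "DD \<subseteq> DB"
    and clC: "clinear_on DC C" and DAC: "DA \<subseteq> DC" and cA: "cA \<ge> 0" and cD: "cD \<ge> 0"
    and Cb: "\<forall>x\<in>DA. norm (C x) \<le> cA * norm (A x)" and Bb: "\<forall>y\<in>DD. norm (B y) \<le> cD * norm (D y)"
    and Kb: "\<forall>z\<in>DA \<times> DD. norm (block_op A (\<lambda>_. 0) (\<lambda>_. 0) D z) \<le> KK * norm (block_op A B C D z)"
begin

abbreviation "AA \<equiv> block_op A B C D"
abbreviation "DM \<equiv> DA \<times> DD"

lemma clAA: "clinear_on DM AA"
  by (rule clinear_on_block[OF clA clD clB DDB clC DAC])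

lemma AA_eq: "AA z = (A (fst z) + B (snd z), C (fst z) + D (snd z))"
  by (simp add: block_op_def)

lemma B_add: "x \<in> DD \<Longrightarrow> y \<in> DD \<Longrightarrow> B (x + y) = B x + B y"
  using cl_add[OF clB] DDB by auto
lemma B_cscale: "x \<in> DD \<Longrightarrow> B (cscale c x) = cscale c (B x)"
  using cl_cscale[OF clB] DDB by auto
lemma B_diff: "x \<in> DD \<Longrightarrow> y \<in> DD \<Longrightarrow> B (x - y) = B x - B y"
  using cl_diff[OF clB] DDB by auto
lemma C_add: "x \<in> DA \<Longrightarrow> y \<in> DA \<Longrightarrow> C (x + y) = C x + C y"
  using cl_add[OF clC] DAC by auto
lemma C_cscale: "x \<in> DA \<Longrightarrow> C (cscale c x) = cscale c (C x)"
  using cl_cscale[OF clC] DAC by auto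
lemma C_diff: "x \<in> DA \<Longrightarrow> y \<in> DA \<Longrightarrow> C (x - y) = C x - C y"
  using cl_diff[OF clC] DAC by auto

definition "RA l = resolvent DA A l"
definition "RD l = resolvent DD D l"
definition "X l y = B (RD l y)"
definition "Y l x = C (RA l x)"

lemma M1_eq: "M1 DA A B C DD D l x = x - X l (Y l x)"
  by (simp add: M1_def X_def Y_def RA_def RD_def)
lemma M2_eq: "M2 DA A B C DD D l y = y - Y l (X l y)"
  by (simp add: M2_def X_def Y_def RA_def RD_def)

context
  fixes l assumes rA: "l \<in> resolvent_set DA A" and rD: "l \<in> resolvent_set DD D"
begin

lemma RA_bcl: "bounded_clinear (RA l)" using res_bcl[OF rA] by (simp add: RA_def)
lemma RD_bcl: "bounded_clinear (RD l)" using res_bcl[OF rD] by (simp add: RD_def)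
lemma RA_in: "RA l x \<in> DA" using res_in[OF rA] by (simp add: RA_def)
lemma RD_in: "RD l x \<in> DD" using res_in[OF rD] by (simp add: RD_def)
lemma RA_right: "cscale l (RA l x) - A (RA l x) = x" using res_right[OF rA] by (simp add: RA_def)
lemma RD_right: "cscale l (RD l x) - D (RD l x) = x" using res_right[OF rD] by (simp add: RD_def)
lemma RA_left: "u \<in> DA \<Longrightarrow> RA l (cscale l u - A u) = u" using res_left[OF rA] by (simp add: RA_def)
lemma RD_left: "u \<in> DD \<Longrightarrow> RD l (cscale l u - D u) = u" using res_left[OF rD] by (simp add: RD_def)
lemma A_RA: "A (RA l x) = cscale l (RA l x) - x" using RA_right[of x] by (simp add: algebra_simps)
lemma D_RD: "D (RD l x) = cscale l (RD l x) - x" using RD_right[of x] by (simp add: algebra_simps)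

lemma X_bcl: "bounded_clinear (X l)"
proof -
  have "X l = (\<lambda>y. B (resolvent DD D l y))" by (rule ext) (simp add: X_def RD_def)
  then show ?thesis using rel_bcl[OF clD rD clB DDB Bb cD] by simp
qed
lemma Y_bcl: "bounded_clinear (Y l)"
proof -
  have "Y l = (\<lambda>y. C (resolvent DA A l y))" by (rule ext) (simp add: Y_def RA_def)
  then show ?thesis using rel_bcl[OF clA rA clC DAC Cb cA] by simp
qed

end

end


context blk begin

definition "Rz l W z = (RA l (W (fst z + X l (snd z))), RD l (snd z + Y l (W (fst z + X l (snd z)))))"

definition "V l x = cscale l (fst (resolvent DM AA l (x, 0))) - A (fst (resolvent DM AA l (x, 0)))"

context
  fixes l assumes rA: "l \<in> resolvent_set DA A" and rD: "l \<in> resolvent_set DD D"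
begin

lemma X_add: "X l (x + y) = X l x + X l y" using bounded_clinear_add[OF X_bcl[OF rA rD]] .
lemma Y_add: "Y l (x + y) = Y l x + Y l y" using bounded_clinear_add[OF Y_bcl[OF rA rD]] .
lemma X_diff: "X l (x - y) = X l x - X l y" using bounded_clinear_diff[OF X_bcl[OF rA rD]] .
lemma Y_diff: "Y l (x - y) = Y l x - Y l y" using bounded_clinear_diff[OF Y_bcl[OF rA rD]] .

lemma Rz_in: "Rz l W z \<in> DM"
  unfolding Rz_def using RA_in[OF rA rD] RD_in[OF rA rD] by (simp add: mem_Times_iff)

lemma Rz_right:
  assumes MW: "\<And>w. M1 DA A B C DD D l (W w) = w"
  shows "cscale l (Rz l W z) - AA (Rz l W z) = z"
proof -
  define w where "w = W (fst z + X l (snd z))"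
  define u where "u = RA l w"
  define v where "v = RD l (snd z + C u)"
  have Yw: "Y l w = C u" by (simp add: Y_def u_def)
  have Rz: "Rz l W z = (u, v)" by (simp add: Rz_def w_def u_def v_def Y_def)
  have Bv: "B v = X l (snd z) + X l (Y l w)"
    unfolding v_def Yw[symmetric] X_def[symmetric] by (rule X_add)
  have M: "w - X l (Y l w) = fst z + X l (snd z)"
    using MW[of "fst z + X l (snd z)"] by (simp add: M1_eq w_def)
  have f: "cscale l u - (A u + B v) = fst z"
  proof -
    have "cscale l u - (A u + B v) = (cscale l u - A u) - B v" by (simp add: algebra_simps)
    also have "cscale l u - A u = w" unfolding u_def by (rule RA_right[OF rA rD])
    finally show ?thesis using Bv M by (simp add: algebra_simps)
  qed
  have s: "cscale l v - (C u + D v) = snd z"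
  proof -
    have "cscale l v - (C u + D v) = (cscale l v - D v) - C u" by (simp add: algebra_simps)
    also have "cscale l v - D v = snd z + C u" unfolding v_def by (rule RD_right[OF rA rD])
    finally show ?thesis by simp
  qed
  show ?thesis unfolding Rz using f s by (simp add: AA_eq cscale_prod_def)
qed

lemma Rz_left:
  assumes WM: "\<And>w. W (M1 DA A B C DD D l w) = w" and uin: "p \<in> DM"
  shows "Rz l W (cscale l p - AA p) = p"
proof -
  obtain a b where p: "p = (a, b)" and a: "a \<in> DA" and b: "b \<in> DD" using uin by auto
  define w0 where "w0 = cscale l a - A a"
  have RAw: "RA l w0 = a" unfolding w0_def by (rule RA_left[OF rA rD a])
  have Yw: "Y l w0 = C a" by (simp add: Y_def RAw)
  have z: "cscale l p - AA p = (w0 - B b, (cscale l b - D b) - C a)"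
    by (simp add: p AA_eq cscale_prod_def w0_def algebra_simps)
  have Xs: "X l ((cscale l b - D b) - C a) = B b - X l (Y l w0)"
  proof -
    have "X l ((cscale l b - D b) - C a) = X l (cscale l b - D b) - X l (C a)" by (rule X_diff)
    also have "X l (cscale l b - D b) = B b" by (simp add: X_def RD_left[OF rA rD b])
    finally show ?thesis using Yw by simp
  qed
  have sum: "(w0 - B b) + X l ((cscale l b - D b) - C a) = M1 DA A B C DD D l w0"
    by (simp add: Xs M1_eq)
  show ?thesis
    unfolding z Rz_def fst_conv snd_conv sum WM RAw Yw
    by (simp add: p RD_left[OF rA rD b])
qed

lemma Rz_bcl:
  assumes "bounded_clinear W"
  shows "bounded_clinear (Rz l W)"
proof -
  have f: "bounded_clinear (\<lambda>z. W (fst z + X l (snd z)))"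
    by (intro bounded_clinear_compose[OF assms] bounded_clinear_plus bounded_clinear_fst
        bounded_clinear_compose[OF X_bcl[OF rA rD]] bounded_clinear_snd)
  have "bounded_clinear (\<lambda>z. (RA l (W (fst z + X l (snd z))), RD l (snd z + Y l (W (fst z + X l (snd z))))))"
    by (intro bounded_clinear_Pair bounded_clinear_compose[OF RA_bcl[OF rA rD] f]
        bounded_clinear_compose[OF RD_bcl[OF rA rD]] bounded_clinear_plus bounded_clinear_snd
        bounded_clinear_compose[OF Y_bcl[OF rA rD] f])
  then show ?thesis unfolding Rz_def[abs_def] .
qed

lemma S2:
  assumes inv: "invertible_bdd (M1 DA A B C DD D l)"
  defines "W \<equiv> inv (M1 DA A B C DD D l)"
  shows "l \<in> resolvent_set DM AA" "resolvent DM AA l = Rz l W"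
proof -
  have MW: "\<And>w. M1 DA A B C DD D l (W w) = w" and WM: "\<And>w. W (M1 DA A B C DD D l w) = w"
    and Wb: "bounded_clinear W"
    using invertible_bdd_inv[OF inv] by (simp_all add: W_def)
  have bij: "bij_betw (\<lambda>x. cscale l x - AA x) DM UNIV"
  proof (rule bij_betw_byWitness[where f'="Rz l W"])
    show "\<forall>a\<in>DM. Rz l W (cscale l a - AA a) = a" using Rz_left[OF WM] by blast
    show "\<forall>a'\<in>UNIV. cscale l (Rz l W a') - AA (Rz l W a') = a'" using Rz_right[OF MW] by blast
    show "(\<lambda>x. cscale l x - AA x) ` DM \<subseteq> UNIV" by simp
    show "Rz l W ` UNIV \<subseteq> DM" using Rz_in by blast
  qed
  have eq: "resolvent DM AA l = Rz l W"
  proof (rule ext)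
    fix z
    show "resolvent DM AA l z = Rz l W z"
      by (rule resolvent_eqI[OF bij_betw_imp_inj_on[OF bij] Rz_in Rz_right[OF MW]])
  qed
  show "l \<in> resolvent_set DM AA" unfolding resolvent_set_def using bij eq Rz_bcl[OF Wb] by simp
  show "resolvent DM AA l = Rz l W" by (rule eq)
qed


lemma V_M1:
  assumes rAA: "l \<in> resolvent_set DM AA"
  shows "M1 DA A B C DD D l (V l x) = x" "V l (M1 DA A B C DD D l x) = x"
proof -
  define R where "R = resolvent DM AA l"
  have Rin: "R z \<in> DM" for z unfolding R_def by (rule res_in[OF rAA])
  have Rr: "cscale l (R z) - AA (R z) = z" for z unfolding R_def by (rule res_right[OF rAA])
  have Rl: "p \<in> DM \<Longrightarrow> R (cscale l p - AA p) = p" for p unfolding R_def by (rule res_left[OF rAA])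
  {
    obtain u v where uv: "R (x, 0) = (u, v)" by (cases "R (x, 0)")
    have u: "u \<in> DA" and v: "v \<in> DD" using Rin[of "(x,0)"] uv by auto
    have e: "cscale l u - (A u + B v) = x" "cscale l v - (C u + D v) = 0"
      using Rr[of "(x,0)"] uv by (auto simp: AA_eq cscale_prod_def)
    define w where "w = cscale l u - A u"
    have Vx: "V l x = w" by (simp add: V_def R_def[symmetric] uv w_def)
    have RAw: "RA l w = u" unfolding w_def by (rule RA_left[OF rA rD u])
    have "cscale l v - D v = C u" using e(2) by (simp add: algebra_simps)
    then have "RD l (C u) = v" using RD_left[OF rA rD v] by simp
    then have XY: "X l (Y l w) = B v" by (simp add: X_def Y_def RAw)
    show "M1 DA A B C DD D l (V l x) = x"
      unfolding Vx M1_eq XY using e(1) by (simp add: w_def algebra_simps)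
  }
  {
    define u0 where "u0 = RA l x"
    define v0 where "v0 = RD l (Y l x)"
    have u0: "u0 \<in> DA" and v0: "v0 \<in> DD" using RA_in[OF rA rD] RD_in[OF rA rD] by (simp_all add: u0_def v0_def)
    have Yx: "Y l x = C u0" by (simp add: Y_def u0_def)
    have Bv0: "B v0 = X l (Y l x)" by (simp add: X_def v0_def)
    have "cscale l (u0, v0) - AA (u0, v0) = (cscale l u0 - A u0 - B v0, (cscale l v0 - D v0) - C u0)"
      by (simp add: AA_eq cscale_prod_def algebra_simps)
    also have "\<dots> = (M1 DA A B C DD D l x, 0)"
      unfolding u0_def v0_def using RA_right[OF rA rD, of x] RD_right[OF rA rD, of "Y l x"]
      by (simp add: M1_eq Y_def X_def)
    finally have "R (M1 DA A B C DD D l x, 0) = (u0, v0)"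
      using Rl[of "(u0, v0)"] u0 v0 by simp
    then show "V l (M1 DA A B C DD D l x) = x"
      by (simp add: V_def R_def[symmetric] u0_def RA_right[OF rA rD])
  }
qed

lemma V_bcl:
  assumes rAA: "l \<in> resolvent_set DM AA"
  shows "bounded_clinear (V l)"
proof -
  define R where "R = resolvent DM AA l"
  have Rb: "bounded_clinear R" unfolding R_def by (rule res_bcl[OF rAA])
  have Rin: "R z \<in> DM" for z unfolding R_def by (rule res_in[OF rAA])
  have AAR: "AA (R z) = cscale l (R z) - z" for z unfolding R_def by (rule res_T[OF rAA])
  have emb: "bounded_clinear (\<lambda>x::'a. (x, 0::'b))"
    by (intro bounded_clinear_Pair bounded_clinear_ident) (simp add: bounded_clinear_def)
  have FR: "bounded_clinear (\<lambda>x. fst (R (x, 0::'b)))"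
    by (intro bounded_clinear_compose[OF bounded_clinear_fst] bounded_clinear_compose[OF Rb emb])
  obtain K where K: "K \<ge> 0" "\<And>z. norm (R z) \<le> K * norm z"
    using bounded_clinear_norm_ex[OF Rb] by blast
  have fin: "fst (R z) \<in> DA" for z using Rin[of z] by (auto simp: mem_Times_iff)
  have AF: "bounded_clinear (\<lambda>x. A (fst (R (x, 0::'b))))"
  proof (rule bounded_clinear_intro[where K="\<bar>KK\<bar> * (cmod l * K + 1)"])
    fix x y :: 'a
    show "A (fst (R (x + y, 0))) = A (fst (R (x, 0))) + A (fst (R (y, 0)))"
      using bounded_clinear_add[OF FR, of x y] fin cl_add[OF clA] by simp
  next
    fix c x
    show "A (fst (R (cscale c x, 0))) = cscale c (A (fst (R (x, 0))))"
      using bounded_clinear_cscale[OF FR, of c x] fin cl_cscale[OF clA] by simp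
  next
    fix x :: 'a
    have "norm (A (fst (R (x, 0)))) \<le> norm (block_op A (\<lambda>_. 0) (\<lambda>_. 0) D (R (x, 0)))"
      by (simp add: block_op_def norm_Pair)
    also have "\<dots> \<le> KK * norm (AA (R (x, 0)))" using Kb Rin by blast
    also have "\<dots> \<le> \<bar>KK\<bar> * norm (AA (R (x, 0)))" by (simp add: mult_right_mono)
    also have "norm (AA (R (x, 0))) \<le> cmod l * K * norm (x, 0::'b) + norm (x, 0::'b)"
      unfolding AAR using norm_triangle_ineq4[of "cscale l (R (x, 0))" "(x, 0)"] norm_cscale_le[OF K(2), of l "(x,0)"]
      by linarith
    then have "\<bar>KK\<bar> * norm (AA (R (x, 0))) \<le> \<bar>KK\<bar> * (cmod l * K * norm x + norm x)"
      by (intro mult_left_mono) auto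
    finally show "norm (A (fst (R (x, 0)))) \<le> \<bar>KK\<bar> * (cmod l * K + 1) * norm x"
      by (simp add: algebra_simps)
  qed
  have "bounded_clinear (\<lambda>x. cscale l (fst (R (x, 0::'b))) - A (fst (R (x, 0::'b))))"
    by (intro bounded_clinear_minus bounded_clinear_cscale_fun FR AF)
  then show ?thesis unfolding V_def[abs_def] R_def .
qed

lemma S1:
  assumes rAA: "l \<in> resolvent_set DM AA"
  shows "invertible_bdd (M1 DA A B C DD D l)" "inv (M1 DA A B C DD D l) = V l"
proof -
  have b: "bij (M1 DA A B C DD D l)" and i: "inv (M1 DA A B C DD D l) = V l"
    using inv_witness[of "M1 DA A B C DD D l" "V l"] V_M1[OF rAA] by auto
  show "invertible_bdd (M1 DA A B C DD D l)" unfolding invertible_bdd_def using b i V_bcl[OF rAA] by simp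
  show "inv (M1 DA A B C DD D l) = V l" by (rule i)
qed

definition "U2 W2 x = x + X l (W2 (Y l x))"

lemma S3:
  assumes inv: "invertible_bdd (M2 DA A B C DD D l)"
  defines "W2 \<equiv> inv (M2 DA A B C DD D l)"
  shows "invertible_bdd (M1 DA A B C DD D l)" "inv (M1 DA A B C DD D l) = U2 W2"
proof -
  have MW: "\<And>w. M2 DA A B C DD D l (W2 w) = w" and WM: "\<And>w. W2 (M2 DA A B C DD D l w) = w"
    and Wb: "bounded_clinear W2"
    using invertible_bdd_inv[OF inv] by (simp_all add: W2_def)
  have 1: "M1 DA A B C DD D l (U2 W2 x) = x" for x
  proof -
    have m: "W2 (Y l x) - Y l (X l (W2 (Y l x))) = Y l x" using MW[of "Y l x"] by (simp add: M2_eq)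
    have "M1 DA A B C DD D l (U2 W2 x) = x + X l (W2 (Y l x)) - X l (Y l x + Y l (X l (W2 (Y l x))))"
      by (simp add: M1_eq U2_def Y_add)
    also have "\<dots> = x + X l (W2 (Y l x) - Y l (X l (W2 (Y l x))) - Y l x)"
      by (simp add: X_add X_diff algebra_simps)
    also have "\<dots> = x" unfolding m by (simp add: bounded_clinear_zero[OF X_bcl[OF rA rD]])
    finally show ?thesis .
  qed
  have 2: "U2 W2 (M1 DA A B C DD D l x) = x" for x
  proof -
    have "Y l (M1 DA A B C DD D l x) = M2 DA A B C DD D l (Y l x)"
      by (simp add: M1_eq M2_eq Y_diff)
    then have "U2 W2 (M1 DA A B C DD D l x) = x - X l (Y l x) + X l (Y l x)"
      by (simp add: U2_def WM M1_eq)
    then show ?thesis by simp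
  qed
  have b: "bij (M1 DA A B C DD D l)" and i: "inv (M1 DA A B C DD D l) = U2 W2"
    using inv_witness[of "M1 DA A B C DD D l" "U2 W2"] 1 2 by auto
  have "bounded_clinear (U2 W2)"
    unfolding U2_def[abs_def]
    by (intro bounded_clinear_plus bounded_clinear_ident bounded_clinear_compose[OF X_bcl[OF rA rD]]
        bounded_clinear_compose[OF Wb] Y_bcl[OF rA rD])
  then show "invertible_bdd (M1 DA A B C DD D l)" unfolding invertible_bdd_def using b i by simp
  show "inv (M1 DA A B C DD D l) = U2 W2" by (rule i)
qed

end

end


lemma Rb_minus:
  assumes "Rb Q I F K1" "Rb Q I G K2"
  shows "\<exists>K. Rb Q I (\<lambda>l x. F l x - G l x) K"
proof -
  note n = Rb_comp[OF Rb_const[OF bounded_linear_minus[OF bounded_linear_ident]] assms(2)]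
  have e: "(\<lambda>l x. F l x + - G l x) = (\<lambda>l x. F l x - G l x)" by simp
  from Rb_add[OF assms(1) n] show ?thesis unfolding e by blast
qed

lemma Rb_rel:
  assumes clT: "clinear_on DT T" and clS: "clinear_on DS S" and sub: "DT \<subseteq> DS"
    and bnd: "\<forall>y\<in>DT. norm (S y) \<le> c * norm (T y)" and c: "c \<ge> 0"
    and rs: "\<forall>l\<in>I. l \<in> resolvent_set DT T"
    and R: "Rb Q I (\<lambda>l y. cscale l (resolvent DT T l y)) K"
  shows "\<exists>K'. Rb Q I (\<lambda>l y. S (resolvent DT T l y)) K'"
proof -
  obtain K1 where G: "Rb Q I (\<lambda>l y. cscale l (resolvent DT T l y) - y) K1"
    using Rb_minus[OF R Rb_id] by blast
  have "Rb Q I (\<lambda>l y. S (resolvent DT T l y)) (c * K1)"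
  proof (rule Rb_cmp[OF _ c G])
    fix m ls xs and \<epsilon> :: "nat \<Rightarrow> real"
    assume "Q m ls" and l: "\<forall>n<m. ls n \<in> I"
    have inT: "\<forall>n<m. resolvent DT T (ls n) (xs n) \<in> DT" using res_in rs l by blast
    then have inS: "\<forall>n<m. resolvent DT T (ls n) (xs n) \<in> DS" using sub by blast
    let ?s = "\<Sum>n<m. \<epsilon> n *\<^sub>R resolvent DT T (ls n) (xs n)"
    have e1: "(\<Sum>n<m. \<epsilon> n *\<^sub>R S (resolvent DT T (ls n) (xs n))) = S ?s"
      using cl_rsum[OF clS inS] by simp
    have sT: "?s \<in> DT" using cl_rsum[OF clT inT] by simp
    have e2: "T ?s = (\<Sum>n<m. \<epsilon> n *\<^sub>R (cscale (ls n) (resolvent DT T (ls n) (xs n)) - xs n))"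
    proof -
      have "T ?s = (\<Sum>n<m. \<epsilon> n *\<^sub>R T (resolvent DT T (ls n) (xs n)))"
        using cl_rsum[OF clT inT] by simp
      also have "\<dots> = (\<Sum>n<m. \<epsilon> n *\<^sub>R (cscale (ls n) (resolvent DT T (ls n) (xs n)) - xs n))"
      proof (intro sum.cong refl)
        fix n assume "n \<in> {..<m}"
        then have "ls n \<in> resolvent_set DT T" using rs l by auto
        then show "\<epsilon> n *\<^sub>R T (resolvent DT T (ls n) (xs n)) = \<epsilon> n *\<^sub>R (cscale (ls n) (resolvent DT T (ls n) (xs n)) - xs n)"
          by (simp add: res_T)
      qed
      finally show ?thesis .
    qed
    have "norm (S ?s) \<le> c * norm (T ?s)" using bnd sT by blast
    then show "norm (\<Sum>n<m. \<epsilon> n *\<^sub>R S (resolvent DT T (ls n) (xs n)))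
        \<le> c * norm (\<Sum>n<m. \<epsilon> n *\<^sub>R (cscale (ls n) (resolvent DT T (ls n) (xs n)) - xs n))"
      unfolding e1 e2 .
  qed
  then show ?thesis by blast
qed

context blk begin

context
  fixes I Q KA KD
  assumes rAI: "\<forall>l\<in>I. l \<in> resolvent_set DA A" and rDI: "\<forall>l\<in>I. l \<in> resolvent_set DD D"
    and FA: "Rb Q I (\<lambda>l x. cscale l (RA l x)) KA" and FD: "Rb Q I (\<lambda>l x. cscale l (RD l x)) KD"
begin

lemma X_Rb: "\<exists>K. Rb Q I X K"
proof -
  have "Rb Q I (\<lambda>l x. cscale l (resolvent DD D l x)) KD" using FD by (simp add: RD_def[abs_def])
  from Rb_rel[OF clD clB DDB Bb cD rDI this] show ?thesis
    by (simp add: X_def[abs_def] RD_def[abs_def])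
qed

lemma Y_Rb: "\<exists>K. Rb Q I Y K"
proof -
  have "Rb Q I (\<lambda>l x. cscale l (resolvent DA A l x)) KA" using FA by (simp add: RA_def[abs_def])
  from Rb_rel[OF clA clC DAC Cb cA rAI this] show ?thesis
    by (simp add: Y_def[abs_def] RA_def[abs_def])
qed

lemma G2:
  assumes inv: "\<forall>l\<in>I. invertible_bdd (M1 DA A B C DD D l)"
    and RW: "Rb Q I (\<lambda>l. inv (M1 DA A B C DD D l)) KW"
  shows "\<forall>l\<in>I. l \<in> resolvent_set DM AA"
    "\<exists>K. Rb Q I (\<lambda>l z. cscale l (resolvent DM AA l z)) K"
proof -
  show "\<forall>l\<in>I. l \<in> resolvent_set DM AA" using S2(1) rAI rDI inv by blast
  define W where "W l = inv (M1 DA A B C DD D l)" for l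
  have RW': "Rb Q I W KW" using RW by (simp add: W_def[abs_def])
  obtain KX where KX: "Rb Q I X KX" using X_Rb by blast
  obtain KY where KY: "Rb Q I Y KY" using Y_Rb by blast
  note fstR = Rb_const[OF bounded_linear_fst, of Q I]
  note sndR = Rb_const[OF bounded_linear_snd, of Q I]
  obtain KP where P: "Rb Q I (\<lambda>l z. fst z + X l (snd z)) KP"
    using Rb_add[OF fstR Rb_comp[OF KX sndR]] by blast
  obtain K1 where P1: "Rb Q I (\<lambda>l z. cscale l (RA l (W l (fst z + X l (snd z))))) K1"
    using Rb_comp[OF FA Rb_comp[OF RW' P]] by blast
  obtain K2 where P2: "Rb Q I (\<lambda>l z. cscale l (RD l (snd z + Y l (W l (fst z + X l (snd z)))))) K2"
    using Rb_comp[OF FD Rb_add[OF sndR Rb_comp[OF KY Rb_comp[OF RW' P]]]] by blast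
  obtain K3 where P3: "Rb Q I (\<lambda>l z. (cscale l (RA l (W l (fst z + X l (snd z)))),
                  cscale l (RD l (snd z + Y l (W l (fst z + X l (snd z))))))) K3"
    using Rb_pair[OF P1 P2] by blast
  have "Rb Q I (\<lambda>l z. cscale l (resolvent DM AA l z)) K3"
  proof (rule Rb_cong[OF _ P3])
    fix l z assume l: "l \<in> I"
    have "resolvent DM AA l = Rz l (W l)"
      using S2(2)[of l] rAI rDI inv l by (simp add: W_def)
    then show "(cscale l (RA l (W l (fst z + X l (snd z)))),
                  cscale l (RD l (snd z + Y l (W l (fst z + X l (snd z)))))) = cscale l (resolvent DM AA l z)"
      by (simp add: Rz_def cscale_prod_def)
  qed
  then show "\<exists>K. Rb Q I (\<lambda>l z. cscale l (resolvent DM AA l z)) K" by blast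
qed

lemma G3:
  assumes inv: "\<forall>l\<in>I. invertible_bdd (M2 DA A B C DD D l)"
    and RW: "Rb Q I (\<lambda>l. inv (M2 DA A B C DD D l)) KW"
  shows "\<forall>l\<in>I. invertible_bdd (M1 DA A B C DD D l)"
    "\<exists>K. Rb Q I (\<lambda>l. inv (M1 DA A B C DD D l)) K"
proof -
  show "\<forall>l\<in>I. invertible_bdd (M1 DA A B C DD D l)" using S3(1) rAI rDI inv by blast
  obtain KX where KX: "Rb Q I X KX" using X_Rb by blast
  obtain KY where KY: "Rb Q I Y KY" using Y_Rb by blast
  obtain K where P: "Rb Q I (\<lambda>l x. x + X l (inv (M2 DA A B C DD D l) (Y l x))) K"
    using Rb_add[OF Rb_id Rb_comp[OF KX Rb_comp[OF RW KY]]] by blast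
  have "Rb Q I (\<lambda>l. inv (M1 DA A B C DD D l)) K"
  proof (rule Rb_cong[OF _ P])
    fix l x assume l: "l \<in> I"
    show "x + X l (inv (M2 DA A B C DD D l) (Y l x)) = inv (M1 DA A B C DD D l) x"
      using S3(2)[of l] rAI rDI inv l by (simp add: U2_def)
  qed
  then show "\<exists>K. Rb Q I (\<lambda>l. inv (M1 DA A B C DD D l)) K" by blast
qed

lemma G1:
  assumes rAA: "\<forall>l\<in>I. l \<in> resolvent_set DM AA"
    and RR: "Rb Q I (\<lambda>l z. cscale l (resolvent DM AA l z)) KR"
  shows "\<forall>l\<in>I. invertible_bdd (M1 DA A B C DD D l)"
    "\<exists>K. Rb Q I (\<lambda>l. inv (M1 DA A B C DD D l)) K"
proof -
  show "\<forall>l\<in>I. invertible_bdd (M1 DA A B C DD D l)" using S1(1) rAI rDI rAA by blast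
  have embL: "bounded_linear (\<lambda>x::'a. (x, 0::'b))"
    by (intro bounded_linear_Pair bounded_linear_ident bounded_linear_zero)
  have emb: "Rb Q I (\<lambda>l (x::'a). (x, 0::'b)) (onorm (\<lambda>x::'a. (x, 0::'b)))"
    by (rule Rb_const[OF embL])
  note fstR = Rb_const[OF bounded_linear_fst, of Q I]
  obtain K1 where P1: "Rb Q I (\<lambda>l x. fst (cscale l (resolvent DM AA l (x, 0::'b)))) K1"
    using Rb_comp[OF fstR Rb_comp[OF RR emb]] by blast
  obtain K2 where H: "Rb Q I (\<lambda>l x. cscale l (resolvent DM AA l (x, 0::'b)) - (x, 0)) K2"
    using Rb_minus[OF Rb_comp[OF RR emb] emb] by blast
  have P2: "Rb Q I (\<lambda>l x. A (fst (resolvent DM AA l (x, 0::'b)))) (\<bar>KK\<bar> * K2)"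
  proof (rule Rb_cmp[OF _ _ H])
    fix m ls xs and \<epsilon> :: "nat \<Rightarrow> real"
    assume "Q m ls" and l: "\<forall>n<m. ls n \<in> I"
    let ?R = "\<lambda>n. resolvent DM AA (ls n) (xs n, 0::'b)"
    have inM: "\<forall>n<m. ?R n \<in> DM" using res_in rAA l by blast
    then have inA: "\<forall>n<m. fst (?R n) \<in> DA" by (auto simp: mem_Times_iff)
    let ?s = "\<Sum>n<m. \<epsilon> n *\<^sub>R ?R n"
    have sM: "?s \<in> DM" using cl_rsum[OF clAA inM] by simp
    have "(\<Sum>n<m. \<epsilon> n *\<^sub>R A (fst (?R n))) = A (\<Sum>n<m. \<epsilon> n *\<^sub>R fst (?R n))"
      using cl_rsum[OF clA inA] by simp
    also have "(\<Sum>n<m. \<epsilon> n *\<^sub>R fst (?R n)) = fst ?s" by (simp add: fst_sum)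
    finally have e1: "(\<Sum>n<m. \<epsilon> n *\<^sub>R A (fst (?R n))) = A (fst ?s)" .
    have "norm (A (fst ?s)) \<le> norm (block_op A (\<lambda>_. 0) (\<lambda>_. 0) D ?s)"
      by (simp add: block_op_def norm_Pair)
    also have "\<dots> \<le> KK * norm (AA ?s)" by (rule Kb[rule_format, OF sM])
    also have "\<dots> \<le> \<bar>KK\<bar> * norm (AA ?s)" by (simp add: mult_right_mono)
    also have "AA ?s = (\<Sum>n<m. \<epsilon> n *\<^sub>R (cscale (ls n) (?R n) - (xs n, 0)))"
    proof -
      have "AA ?s = (\<Sum>n<m. \<epsilon> n *\<^sub>R AA (?R n))" using cl_rsum[OF clAA inM] by simp
      also have "\<dots> = (\<Sum>n<m. \<epsilon> n *\<^sub>R (cscale (ls n) (?R n) - (xs n, 0)))"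
      proof (intro sum.cong refl)
        fix n assume "n \<in> {..<m}"
        then have "ls n \<in> resolvent_set DM AA" using rAA l by auto
        then show "\<epsilon> n *\<^sub>R AA (?R n) = \<epsilon> n *\<^sub>R (cscale (ls n) (?R n) - (xs n, 0))"
          by (simp add: res_T)
      qed
      finally show ?thesis .
    qed
    finally show "norm (\<Sum>n<m. \<epsilon> n *\<^sub>R A (fst (?R n)))
        \<le> \<bar>KK\<bar> * norm (\<Sum>n<m. \<epsilon> n *\<^sub>R (cscale (ls n) (?R n) - (xs n, 0)))"
      unfolding e1 .
  qed simp
  obtain K3 where P3: "Rb Q I (\<lambda>l x. fst (cscale l (resolvent DM AA l (x, 0::'b))) - A (fst (resolvent DM AA l (x, 0::'b)))) K3"
    using Rb_minus[OF P1 P2] by blast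
  have "Rb Q I (\<lambda>l. inv (M1 DA A B C DD D l)) K3"
  proof (rule Rb_cong[OF _ P3])
    fix l x assume l: "l \<in> I"
    show "fst (cscale l (resolvent DM AA l (x, 0::'b))) - A (fst (resolvent DM AA l (x, 0::'b))) = inv (M1 DA A B C DD D l) x"
      using S1(2)[of l] rAI rDI rAA l by (simp add: V_def cscale_prod_def)
  qed
  then show "\<exists>K. Rb Q I (\<lambda>l. inv (M1 DA A B C DD D l)) K" by blast
qed

end

end


lemma sect_cond_SC: "sect_cond DT T \<omega> \<longleftrightarrow> 0 < \<omega> \<and> \<omega> < pi \<and> SC \<omega> \<subseteq> resolvent_set DT T \<and>
     (\<exists>K. \<forall>l \<in> SC \<omega>. onorm (\<lambda>x. cscale l (resolvent DT T l x)) \<le> K)"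
  by (simp add: sect_cond_def SC_def)

lemma sect_cond_mono:
  assumes "sect_cond DT T \<omega>" "\<omega> \<le> \<phi>" "\<phi> < pi"
  shows "sect_cond DT T \<phi>"
  using assms SC_mono[OF assms(2)] unfolding sect_cond_SC by (meson less_le_trans subset_iff)

lemma sect_cond_pos: "sect_cond DT T \<omega> \<Longrightarrow> 0 < \<omega>"
  by (simp add: sect_cond_def)

lemma sect_angle_lt:
  assumes "sectorial DT T" "sect_angle DT T < \<phi>" "\<phi> < pi"
  shows "sect_cond DT T \<phi>"
proof -
  have "{\<omega>. sect_cond DT T \<omega>} \<noteq> {}" using assms(1) by (auto simp: sectorial_def)
  then obtain \<omega> where "sect_cond DT T \<omega>" "\<omega> < \<phi>"
    using cInf_lessD[of "{\<omega>. sect_cond DT T \<omega>}" \<phi>] assms(2) by (auto simp: sect_angle_def)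
  then show ?thesis using sect_cond_mono assms(3) by (meson less_imp_le)
qed

lemma sect_angle_nonneg:
  assumes "sectorial DT T" shows "0 \<le> sect_angle DT T"
proof -
  have "{\<omega>. sect_cond DT T \<omega>} \<noteq> {}" using assms(1) by (auto simp: sectorial_def)
  then show ?thesis unfolding sect_angle_def
    by (rule cInf_greatest) (auto dest: sect_cond_pos)
qed

lemma Inf_le_intro:
  fixes S :: "real set"
  assumes "\<psi> < pi" "bdd_below S" "\<And>\<phi>. \<psi> < \<phi> \<Longrightarrow> \<phi> < pi \<Longrightarrow> \<phi> \<in> S"
  shows "Inf S \<le> \<psi>"
proof (rule ccontr)
  assume "\<not> Inf S \<le> \<psi>"
  define \<phi> where "\<phi> = (\<psi> + min (Inf S) pi) / 2"
  have "\<psi> < \<phi>" "\<phi> < pi" "\<phi> < Inf S" using \<open>\<not> Inf S \<le> \<psi>\<close> assms(1) by (auto simp: \<phi>_def min_def)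
  then show False using cInf_lower[OF assms(3) assms(2)] by fastforce
qed

lemma sect_angle_le_intro:
  assumes "\<psi> < pi" "\<And>\<phi>. \<psi> < \<phi> \<Longrightarrow> \<phi> < pi \<Longrightarrow> sect_cond DT T \<phi>"
  shows "sect_angle DT T \<le> \<psi>"
  unfolding sect_angle_def
proof (rule Inf_le_intro[OF assms(1)])
  show "bdd_below {\<omega>. sect_cond DT T \<omega>}"
    by (rule bdd_belowI[where m=0]) (auto dest: sect_cond_pos)
qed (use assms in auto)

lemma R_bounded_mono:
  assumes "R_bounded {F l | l. l \<in> S}" "S' \<subseteq> S"
  shows "R_bounded {F l | l. l \<in> S'}"
  using assms unfolding R_bounded_iff by (meson Rb_mono subsetD)

lemma R_sect_cond_mono:
  assumes "R_sect_cond DT T \<omega>" "\<omega> \<le> \<phi>" "\<phi> < pi"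
  shows "R_sect_cond DT T \<phi>"
proof -
  have "SC \<phi> \<subseteq> SC \<omega>" by (rule SC_mono[OF assms(2)])
  then show ?thesis using assms R_bounded_mono[of "\<lambda>l x. cscale l (resolvent DT T l x)" "SC \<omega>" "SC \<phi>"]
    unfolding R_sect_cond_def SC_def by auto
qed

lemma R_angle_lt:
  assumes "R_sectorial DT T" "R_angle DT T < \<phi>" "\<phi> < pi"
  shows "R_sect_cond DT T \<phi>"
proof -
  have "{\<omega>. R_sect_cond DT T \<omega>} \<noteq> {}" using assms(1) by (auto simp: R_sectorial_def)
  then obtain \<omega> where "R_sect_cond DT T \<omega>" "\<omega> < \<phi>"
    using cInf_lessD[of "{\<omega>. R_sect_cond DT T \<omega>}" \<phi>] assms(2) by (auto simp: R_angle_def)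
  then show ?thesis using R_sect_cond_mono assms(3) by (meson less_imp_le)
qed

lemma R_angle_le_intro:
  assumes "\<psi> < pi" "\<And>\<phi>. \<psi> < \<phi> \<Longrightarrow> \<phi> < pi \<Longrightarrow> R_sect_cond DT T \<phi>"
  shows "R_angle DT T \<le> \<psi>"
  unfolding R_angle_def
proof (rule Inf_le_intro[OF assms(1)])
  show "bdd_below {\<omega>. R_sect_cond DT T \<omega>}"
    by (rule bdd_belowI[where m="sect_angle DT T"]) (auto simp: R_sect_cond_def)
qed (use assms in auto)

lemma R_angle_ge: "R_sectorial DT T \<Longrightarrow> sect_angle DT T \<le> R_angle DT T"
  unfolding R_angle_def R_sectorial_def
  by (rule cInf_greatest) (auto simp: R_sect_cond_def)

lemma res_scaled_bl:
  "l \<in> resolvent_set DT T \<Longrightarrow> bounded_clinear (\<lambda>x. cscale l (resolvent DT T l x))"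
  by (rule bounded_clinear_cscale_fun[OF res_bcl])

lemma sc_Rb:
  assumes "sect_cond DT T \<phi>"
  shows "\<forall>l\<in>SC \<phi>. l \<in> resolvent_set DT T" "\<exists>K. Rb Qc (SC \<phi>) (\<lambda>l x. cscale l (resolvent DT T l x)) K"
proof -
  show r: "\<forall>l\<in>SC \<phi>. l \<in> resolvent_set DT T" using assms unfolding sect_cond_SC by blast
  obtain K where K: "\<forall>l \<in> SC \<phi>. onorm (\<lambda>x. cscale l (resolvent DT T l x)) \<le> K"
    using assms unfolding sect_cond_SC by blast
  have "Rb Qc (SC \<phi>) (\<lambda>l x. cscale l (resolvent DT T l x)) (max K 0)"
  proof (rule Rb_Qc_intro)
    fix l assume l: "l \<in> SC \<phi>"
    show "bounded_linear (\<lambda>x. cscale l (resolvent DT T l x))"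
      using res_scaled_bl[of l DT T] r l by (simp add: bounded_clinear_def)
    fix x
    have bl: "bounded_clinear (\<lambda>x. cscale l (resolvent DT T l x))" using res_scaled_bl[of l DT T] r l by blast
    have "norm (cscale l (resolvent DT T l x)) \<le> onorm (\<lambda>x. cscale l (resolvent DT T l x)) * norm x"
      by (rule bounded_clinear_norm[OF bl])
    also have "\<dots> \<le> max K 0 * norm x" using K l by (intro mult_right_mono) auto
    finally show "norm (cscale l (resolvent DT T l x)) \<le> max K 0 * norm x" .
  qed simp
  then show "\<exists>K. Rb Qc (SC \<phi>) (\<lambda>l x. cscale l (resolvent DT T l x)) K" by blast
qed

lemma Rb_onorm:
  assumes "Rb Qc I F K" "l \<in> I"
  shows "onorm (F l) \<le> \<bar>K\<bar>"
  by (rule onorm_bound) (use Rb_Qc_bound[OF assms] in auto)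

lemma sc_intro:
  assumes "0 < \<phi>" "\<phi> < pi" "\<forall>l\<in>SC \<phi>. l \<in> resolvent_set DT T"
    "Rb Qc (SC \<phi>) (\<lambda>l x. cscale l (resolvent DT T l x)) K"
  shows "sect_cond DT T \<phi>"
  unfolding sect_cond_SC using assms Rb_onorm[OF assms(4)] by blast

lemma onorm_Rb:
  assumes "\<forall>l\<in>I. bounded_clinear (F l)" "\<forall>l\<in>I. onorm (F l) \<le> K"
  shows "Rb Qc I F (max K 0)"
proof (rule Rb_Qc_intro)
  fix l assume l: "l \<in> I"
  then show "bounded_linear (F l)" using assms(1) by (simp add: bounded_clinear_def)
  fix x
  have "norm (F l x) \<le> onorm (F l) * norm x" using assms(1) l bounded_clinear_norm by blast
  also have "\<dots> \<le> max K 0 * norm x" using assms(2) l by (intro mult_right_mono) auto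
  finally show "norm (F l x) \<le> max K 0 * norm x" .
qed simp

lemma sect_inj:
  assumes sT: "sectorial DT T" and x: "x \<in> DT" and Tx: "T x = 0"
  shows "x = 0"
proof -
  have cl: "clinear_on DT T" and rng: "closure (T ` DT) = UNIV" and ex: "\<exists>\<omega>. sect_cond DT T \<omega>"
    using sT by (auto simp: sectorial_def)
  obtain \<omega> where sc: "sect_cond DT T \<omega>" using ex by blast
  have \<omega>: "\<omega> < pi" using sc by (simp add: sect_cond_def)
  obtain K where K: "\<forall>l \<in> SC \<omega>. onorm (\<lambda>x. cscale l (resolvent DT T l x)) \<le> K"
    and rs: "SC \<omega> \<subseteq> resolvent_set DT T" using sc unfolding sect_cond_SC by blast
  define K' where "K' = max K 0"
  have K'0: "K' \<ge> 0" by (simp add: K'_def)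
  have main: "norm x \<le> K' * norm (x - T u) + t * (K' + 1) * norm u" if u: "u \<in> DT" and t: "t > 0" for u t
  proof -
    define l where "l = complex_of_real (- t)"
    have l: "l \<in> resolvent_set DT T" using neg_in_SC[OF t \<omega>] rs by (auto simp: l_def)
    define F where "F y = cscale l (resolvent DT T l y)" for y
    have Fb: "bounded_clinear F" unfolding F_def[abs_def] by (rule res_scaled_bl[OF l])
    have Fn: "norm (F y) \<le> K' * norm y" for y
    proof -
      have "norm (F y) \<le> onorm F * norm y" by (rule bounded_clinear_norm[OF Fb])
      also have "\<dots> \<le> K' * norm y" using K neg_in_SC[OF t \<omega>] unfolding K'_def F_def[abs_def] l_def
        by (intro mult_right_mono) auto
      finally show ?thesis .
    qed
    have Rc: "resolvent DT T l (cscale l y) = cscale l (resolvent DT T l y)" for y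
      by (rule bounded_clinear_cscale[OF res_bcl[OF l]])
    have Rd: "resolvent DT T l (y - z) = resolvent DT T l y - resolvent DT T l z" for y z
      by (rule bounded_clinear_diff[OF res_bcl[OF l]])
    have Fx: "F x = x"
    proof -
      have "resolvent DT T l (cscale l x - T x) = x" by (rule res_left[OF l x])
      then have "resolvent DT T l (cscale l x) = x" using Tx by simp
      then show ?thesis unfolding F_def Rc by simp
    qed
    have FTu: "F (T u) = cscale l (F u - u)"
    proof -
      have "resolvent DT T l (cscale l u - T u) = u" by (rule res_left[OF l u])
      then have "cscale l (resolvent DT T l u) - resolvent DT T l (T u) = u" unfolding Rd Rc .
      then have "resolvent DT T l (T u) = cscale l (resolvent DT T l u) - u" by (simp add: algebra_simps)
      then show ?thesis by (simp add: F_def)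
    qed
    have "norm (F (T u)) \<le> t * (K' + 1) * norm u"
    proof -
      have "norm (F (T u)) = t * norm (F u - u)" by (simp add: FTu norm_cscale l_def t less_imp_le)
      also have "norm (F u - u) \<le> K' * norm u + norm u"
        using norm_triangle_ineq4[of "F u" u] Fn[of u] by linarith
      then have "t * norm (F u - u) \<le> t * (K' * norm u + norm u)" using t by (intro mult_left_mono) auto
      finally show ?thesis by (simp add: algebra_simps)
    qed
    moreover have "x = F (x - T u) + F (T u)" using Fx bounded_clinear_diff[OF Fb, of x "T u"] by simp
    then have "norm x = norm (F (x - T u) + F (T u))" by simp
    then have "norm x \<le> norm (F (x - T u)) + norm (F (T u))" using norm_triangle_ineq[of "F (x - T u)" "F (T u)"] by simp
    ultimately show ?thesis using Fn[of "x - T u"] by linarith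
  qed
  have "norm x \<le> 0 + e" if e: "e > 0" for e
  proof -
    define \<epsilon> where "\<epsilon> = e / (2 * (K' + 1))"
    have \<epsilon>: "\<epsilon> > 0" using e K'0 by (simp add: \<epsilon>_def)
    obtain y where "y \<in> T ` DT" "dist x y < \<epsilon>" using closure_approachableD[of x "T ` DT" \<epsilon>] rng \<epsilon> by auto
    then obtain u where u: "u \<in> DT" and d: "norm (x - T u) < \<epsilon>" by (auto simp: dist_norm)
    define t where "t = \<epsilon> / ((K' + 1) * (norm u + 1))"
    have nu: "norm u + 1 > 0" using norm_ge_zero[of u] by linarith
    have "(K' + 1) * (norm u + 1) > 0" using K'0 nu by (intro mult_pos_pos) auto
    then have t: "t > 0" using \<epsilon> by (simp add: t_def)
    have "t * (K' + 1) * norm u \<le> \<epsilon>"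
    proof -
      have nz: "(K' + 1) * (norm u + 1) \<noteq> 0" using K'0 nu by auto
      have "t * (K' + 1) * norm u \<le> t * ((K' + 1) * (norm u + 1))"
        using t K'0 by (simp add: mult_left_mono algebra_simps)
      also have "\<dots> = \<epsilon>" using nz by (simp add: t_def)
      finally show ?thesis .
    qed
    moreover have "K' * norm (x - T u) \<le> K' * \<epsilon>" using d K'0 by (intro mult_left_mono) auto
    ultimately have "norm x \<le> K' * \<epsilon> + \<epsilon>" using main[OF u t] by linarith
    also have "\<dots> = (K' + 1) * \<epsilon>" by (simp add: algebra_simps)
    also have "\<dots> = e / 2"
    proof -
      have "K' + 1 \<noteq> 0" using K'0 by linarith
      then show ?thesis unfolding \<epsilon>_def by (simp add: divide_simps)
    qed
    finally show ?thesis using e by simp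
  qed
  then have "norm x \<le> 0" by (rule field_le_epsilon)
  then show ?thesis by simp
qed


section \<open>A real Hahn-Banach extension lemma\<close>

definition hbG :: "('v::real_vector \<Rightarrow> real) \<Rightarrow> 'v \<Rightarrow> ('v \<times> real) set \<Rightarrow> bool" where
  "hbG p x0 G \<longleftrightarrow> (0, 0) \<in> G \<and> (\<forall>u\<in>G. \<forall>v\<in>G. u + v \<in> G) \<and> (\<forall>c. \<forall>u\<in>G. c *\<^sub>R u \<in> G) \<and>
     (\<forall>a. (0, a) \<in> G \<longrightarrow> a = 0) \<and> (\<forall>x a. (x, a) \<in> G \<longrightarrow> a \<le> p x) \<and> (x0, p x0) \<in> G"

lemma hbG_D:
  assumes "hbG p x0 G"
  shows "(0, 0) \<in> G" "\<And>u v. u \<in> G \<Longrightarrow> v \<in> G \<Longrightarrow> u + v \<in> G" "\<And>c u. u \<in> G \<Longrightarrow> c *\<^sub>R u \<in> G"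
    "\<And>a. (0, a) \<in> G \<Longrightarrow> a = 0" "\<And>x a. (x, a) \<in> G \<Longrightarrow> a \<le> p x" "(x0, p x0) \<in> G"
  using assms unfolding hbG_def by blast+

lemma hbG_fun:
  assumes "hbG p x0 G" "(x, a) \<in> G" "(x, b) \<in> G"
  shows "a = b"
proof -
  have "(-1) *\<^sub>R (x, b) \<in> G" using assms unfolding hbG_def by blast
  then have "(x, a) + (-1) *\<^sub>R (x, b) \<in> G" using assms unfolding hbG_def by blast
  then have "(0, a - b) \<in> G" by simp
  then show ?thesis using assms(1) unfolding hbG_def by fastforce
qed

lemma real_hahn_banach:
  fixes p :: "'v::real_vector \<Rightarrow> real"
  assumes padd: "\<And>x y. p (x + y) \<le> p x + p y" and pscale: "\<And>c x. c \<ge> 0 \<Longrightarrow> p (c *\<^sub>R x) = c * p x"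
  shows "\<exists>F. (\<forall>x y. F (x + y) = F x + F y) \<and> (\<forall>c x. F (c *\<^sub>R x) = c * F x) \<and> (\<forall>x. F x \<le> p x) \<and> F x0 = p x0"
proof -
  have p0: "p 0 = 0" using pscale[of 0 0] by simp
  have pneg: "- p x \<le> p (- x)" for x using padd[of x "- x"] p0 by simp
  let ?A = "{G. hbG p x0 G}"
  define G0 where "G0 = {(t *\<^sub>R x0, t * p x0) | t. True}"
  have G0: "hbG p x0 G0"
    unfolding hbG_def
  proof (intro conjI allI ballI impI)
    show "(0, 0) \<in> G0" unfolding G0_def by (auto intro!: exI[of _ 0])
    show "(x0, p x0) \<in> G0" unfolding G0_def by (auto intro!: exI[of _ 1])
  next
    fix u v assume "u \<in> G0" "v \<in> G0"
    then obtain s t where "u = (s *\<^sub>R x0, s * p x0)" "v = (t *\<^sub>R x0, t * p x0)" unfolding G0_def by blast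
    then show "u + v \<in> G0" unfolding G0_def by (auto intro!: exI[of _ "s + t"] simp: algebra_simps scaleR_add_left)
  next
    fix c :: real and u assume "u \<in> G0"
    then obtain s where "u = (s *\<^sub>R x0, s * p x0)" unfolding G0_def by blast
    then show "c *\<^sub>R u \<in> G0" unfolding G0_def by (auto intro!: exI[of _ "c * s"])
  next
    fix a assume "(0, a) \<in> G0"
    then obtain t where t: "0 = t *\<^sub>R x0" "a = t * p x0" unfolding G0_def by auto
    then show "a = 0" using p0 by (cases "t = 0") auto
  next
    fix x a assume "(x, a) \<in> G0"
    then obtain t where t: "x = t *\<^sub>R x0" "a = t * p x0" unfolding G0_def by auto
    show "a \<le> p x"
    proof (cases "t \<ge> 0")
      case True
      then show ?thesis using t pscale by simp
    next
      case False
      have "p x = p ((- t) *\<^sub>R (- x0))" using t by simp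
      also have "\<dots> = (- t) * p (- x0)" using False by (intro pscale) auto
      finally have "p x = (- t) * p (- x0)" .
      moreover have "(- t) * (- p x0) \<le> (- t) * p (- x0)" using False pneg[of x0] by (intro mult_left_mono) auto
      ultimately show ?thesis using t by simp
    qed
  qed
  have "\<exists>M\<in>?A. \<forall>X\<in>?A. M \<subseteq> X \<longrightarrow> X = M"
  proof (rule Zorn_Lemma2, intro ballI)
    fix Ch assume Ch: "Ch \<in> chains ?A"
    show "\<exists>U\<in>?A. \<forall>X\<in>Ch. X \<subseteq> U"
    proof (cases "Ch = {}")
      case True
      then show ?thesis using G0 by auto
    next
      case False
      have sub: "\<And>X. X \<in> Ch \<Longrightarrow> hbG p x0 X" and ch: "\<And>X Y. X \<in> Ch \<Longrightarrow> Y \<in> Ch \<Longrightarrow> X \<subseteq> Y \<or> Y \<subseteq> X"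
        using Ch unfolding chains_def chain_subset_def by auto
      have "hbG p x0 (\<Union>Ch)"
        unfolding hbG_def
      proof (intro conjI allI ballI impI)
        obtain X where X: "X \<in> Ch" using False by blast
        show "(0, 0) \<in> \<Union>Ch" using X hbG_D(1)[OF sub[OF X]] by blast
        show "(x0, p x0) \<in> \<Union>Ch" using X hbG_D(6)[OF sub[OF X]] by blast
      next
        fix u v assume "u \<in> \<Union>Ch" "v \<in> \<Union>Ch"
        then obtain X Y where XY: "X \<in> Ch" "Y \<in> Ch" "u \<in> X" "v \<in> Y" by blast
        show "u + v \<in> \<Union>Ch"
        proof (cases "X \<subseteq> Y")
          case True
          then have "u + v \<in> Y" using XY hbG_D(2)[OF sub[OF XY(2)]] by blast
          then show ?thesis using XY by blast
        next
          case False
          then have "Y \<subseteq> X" using ch XY by blast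
          then have "u + v \<in> X" using XY hbG_D(2)[OF sub[OF XY(1)]] by blast
          then show ?thesis using XY by blast
        qed
      next
        fix c :: real and u assume "u \<in> \<Union>Ch"
        then obtain X where X: "X \<in> Ch" "u \<in> X" by blast
        then show "c *\<^sub>R u \<in> \<Union>Ch" using hbG_D(3)[OF sub[OF X(1)] X(2)] by blast
      next
        fix a assume "(0, a) \<in> \<Union>Ch"
        then obtain X where X: "X \<in> Ch" "(0, a) \<in> X" by blast
        then show "a = 0" using hbG_D(4)[OF sub[OF X(1)] X(2)] by blast
      next
        fix x a assume "(x, a) \<in> \<Union>Ch"
        then obtain X where X: "X \<in> Ch" "(x, a) \<in> X" by blast
        then show "a \<le> p x" using hbG_D(5)[OF sub[OF X(1)] X(2)] by blast
      qed
      then show ?thesis by blast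
    qed
  qed
  then obtain M where M: "hbG p x0 M" and max: "\<And>X. hbG p x0 X \<Longrightarrow> M \<subseteq> X \<Longrightarrow> X = M" by blast
  note Madd = hbG_D(2)[OF M] and Mscale = hbG_D(3)[OF M] and Mdom = hbG_D(5)[OF M] and M0 = hbG_D(1)[OF M]
  have total: "\<exists>a. (z, a) \<in> M" for z
  proof (rule ccontr)
    assume nz: "\<nexists>a. (z, a) \<in> M"
    define S where "S = {b - p (y - z) | y b. (y, b) \<in> M}"
    have Sne: "S \<noteq> {}" using M0 unfolding S_def by blast
    have Sup: "s \<le> p (y' + z) - b'" if "s \<in> S" "(y', b') \<in> M" for s y' b'
    proof -
      obtain y b where s: "s = b - p (y - z)" and yb: "(y, b) \<in> M" using \<open>s \<in> S\<close> unfolding S_def by blast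
      have "(y + y', b + b') \<in> M" using Madd[OF yb that(2)] by simp
      then have "b + b' \<le> p (y + y')" by (rule Mdom)
      also have "\<dots> = p ((y - z) + (y' + z))" by (simp add: algebra_simps)
      also have "\<dots> \<le> p (y - z) + p (y' + z)" by (rule padd)
      finally show ?thesis using s by simp
    qed
    have bdd: "bdd_above S" using Sup M0 by (auto intro!: bdd_aboveI)
    define c where "c = Sup S"
    have c1: "b - p (y - z) \<le> c" if "(y, b) \<in> M" for y b
      unfolding c_def using that bdd by (intro cSup_upper) (auto simp: S_def)
    have c2: "c \<le> p (y' + z) - b'" if "(y', b') \<in> M" for y' b'
      unfolding c_def using Sne Sup that by (intro cSup_least) auto
    define M' where "M' = {(x + t *\<^sub>R z, a + t * c) | x a t. (x, a) \<in> M}"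
    have M'h: "hbG p x0 M'"
      unfolding hbG_def
    proof (intro conjI allI ballI impI)
      have "(0::'v, 0::real) = (0 + 0 *\<^sub>R z, 0 + 0 * c)" by simp
      then show "(0, 0) \<in> M'" unfolding M'_def using M0 by blast
      have "(x0, p x0) = (x0 + 0 *\<^sub>R z, p x0 + 0 * c)" by simp
      then show "(x0, p x0) \<in> M'" unfolding M'_def using hbG_D(6)[OF M] by blast
    next
      fix u v assume "u \<in> M'" "v \<in> M'"
      then obtain x1 a1 t1 x2 a2 t2 where u: "u = (x1 + t1 *\<^sub>R z, a1 + t1 * c)" "(x1, a1) \<in> M"
        and v: "v = (x2 + t2 *\<^sub>R z, a2 + t2 * c)" "(x2, a2) \<in> M" unfolding M'_def by blast
      have "(x1 + x2, a1 + a2) \<in> M" using Madd[OF u(2) v(2)] by simp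
      moreover have "u + v = ((x1 + x2) + (t1 + t2) *\<^sub>R z, (a1 + a2) + (t1 + t2) * c)"
        using u v by (simp add: algebra_simps scaleR_add_left)
      ultimately show "u + v \<in> M'" unfolding M'_def by blast
    next
      fix d :: real and u assume "u \<in> M'"
      then obtain x a t where u: "u = (x + t *\<^sub>R z, a + t * c)" "(x, a) \<in> M" unfolding M'_def by blast
      have "(d *\<^sub>R x, d * a) \<in> M" using Mscale[OF u(2), of d] by simp
      moreover have "d *\<^sub>R u = (d *\<^sub>R x + (d * t) *\<^sub>R z, d * a + (d * t) * c)"
        using u by (simp add: algebra_simps)
      ultimately show "d *\<^sub>R u \<in> M'" unfolding M'_def by blast
    next
      fix a' assume "(0, a') \<in> M'"
      then obtain x a t where e: "0 = x + t *\<^sub>R z" "a' = a + t * c" and xa: "(x, a) \<in> M" unfolding M'_def by auto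
      show "a' = 0"
      proof (cases "t = 0")
        case True
        then have "x = 0" using e by simp
        then show ?thesis using e True xa hbG_D(4)[OF M] by auto
      next
        case False
        have tz: "t *\<^sub>R z = - x" using e(1) by (simp add: eq_neg_iff_add_eq_0 add.commute)
        have "z = inverse t *\<^sub>R (t *\<^sub>R z)" using False by simp
        also have "\<dots> = (- inverse t) *\<^sub>R x" unfolding tz by simp
        finally have "z = (- inverse t) *\<^sub>R x" .
        then have "(z, (- inverse t) * a) \<in> M" using Mscale[OF xa, of "- inverse t"] by simp
        then show ?thesis using nz by blast
      qed
    next
      fix x' a' assume "(x', a') \<in> M'"
      then obtain x a t where e: "x' = x + t *\<^sub>R z" "a' = a + t * c" and xa: "(x, a) \<in> M" unfolding M'_def by auto
      show "a' \<le> p x'"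
      proof (cases t "0::real" rule: linorder_cases)
        case equal
        then show ?thesis using e Mdom[OF xa] by simp
      next
        case greater
        have m: "(inverse t *\<^sub>R x, inverse t * a) \<in> M" using Mscale[OF xa, of "inverse t"] by simp
        have "c \<le> p (inverse t *\<^sub>R x + z) - inverse t * a" by (rule c2[OF m])
        then have "t * c \<le> t * (p (inverse t *\<^sub>R x + z) - inverse t * a)" using greater by (intro mult_left_mono) auto
        also have "\<dots> = t * p (inverse t *\<^sub>R x + z) - a" using greater by (simp add: algebra_simps)
        also have "t * p (inverse t *\<^sub>R x + z) = p (t *\<^sub>R (inverse t *\<^sub>R x + z))" using greater by (simp add: pscale)
        also have "t *\<^sub>R (inverse t *\<^sub>R x + z) = x + t *\<^sub>R z" using greater by (simp add: scaleR_add_right)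
        finally show ?thesis using e by simp
      next
        case less
        define s where "s = - t"
        have s: "s > 0" using less by (simp add: s_def)
        have m: "(inverse s *\<^sub>R x, inverse s * a) \<in> M" using Mscale[OF xa, of "inverse s"] by simp
        have "inverse s * a - p (inverse s *\<^sub>R x - z) \<le> c" by (rule c1[OF m])
        then have "s * (inverse s * a - p (inverse s *\<^sub>R x - z)) \<le> s * c" using s by (intro mult_left_mono) auto
        then have "a - s * p (inverse s *\<^sub>R x - z) \<le> s * c" using s by (simp add: algebra_simps)
        also have "s * p (inverse s *\<^sub>R x - z) = p (s *\<^sub>R (inverse s *\<^sub>R x - z))" using s by (simp add: pscale)
        also have "s *\<^sub>R (inverse s *\<^sub>R x - z) = x + t *\<^sub>R z" using s by (simp add: scaleR_diff_right s_def)
        finally show ?thesis using e by (simp add: s_def)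
      qed
    qed
    have "M \<subseteq> M'"
    proof
      fix u assume uM: "u \<in> M"
      obtain x a where ua: "u = (x, a)" by (cases u)
      have xa: "(x, a) \<in> M" using uM ua by simp
      have "\<exists>x' a' t. u = (x' + t *\<^sub>R z, a' + t * c) \<and> (x', a') \<in> M"
        using xa ua by (intro exI[of _ x] exI[of _ a] exI[of _ 0]) simp
      then show "u \<in> M'" unfolding M'_def by blast
    qed
    then have "M' = M" using max[OF M'h] by blast
    moreover have "(z, c) \<in> M'"
    proof -
      have "(z, c) = (0 + 1 *\<^sub>R z, 0 + 1 * c)" by simp
      then show ?thesis unfolding M'_def using M0 by blast
    qed
    ultimately show False using nz by blast
  qed
  define F where "F z = (THE a. (z, a) \<in> M)" for z
  have FM: "(z, F z) \<in> M" for z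
  proof -
    obtain a where a: "(z, a) \<in> M" using total by blast
    have "(THE a. (z, a) \<in> M) = a" using a hbG_fun[OF M] by blast
    then show ?thesis using a by (simp add: F_def)
  qed
  have Feq: "(z, a) \<in> M \<Longrightarrow> F z = a" for z a using hbG_fun[OF M FM] by blast
  show ?thesis
  proof (intro exI conjI allI)
    fix x y show "F (x + y) = F x + F y" using Madd[OF FM[of x] FM[of y]] Feq by simp
  next
    fix c :: real and x show "F (c *\<^sub>R x) = c * F x" using Mscale[OF FM[of x], of c] Feq by simp
  next
    fix x show "F x \<le> p x" using Mdom[OF FM] .
  next
    show "F x0 = p x0" using hbG_D(6)[OF M] Feq by blast
  qed
qed


lemma infdist_add_le:
  fixes M :: "'x::real_normed_vector set"
  assumes M0: "0 \<in> M" and Madd: "\<And>x y. x \<in> M \<Longrightarrow> y \<in> M \<Longrightarrow> x + y \<in> M"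
  shows "infdist (x + y) M \<le> infdist x M + infdist y M"
proof -
  have Mne: "M \<noteq> {}" using M0 by blast
  have "infdist (x + y) M - dist y b \<le> infdist x M" if b: "b \<in> M" for b
  proof -
    have "infdist (x + y) M - dist y b \<le> dist x a" if a: "a \<in> M" for a
    proof -
      have "infdist (x + y) M \<le> dist (x + y) (a + b)" by (rule infdist_le[OF Madd[OF a b]])
      also have "\<dots> \<le> dist x a + dist y b"
        by (simp add: dist_norm) (metis add_diff_add norm_triangle_ineq)
      finally show ?thesis by simp
    qed
    then show ?thesis unfolding infdist_notempty[OF Mne] by (intro cINF_greatest[OF Mne]) auto
  qed
  then have "infdist (x + y) M - infdist x M \<le> dist y b" if "b \<in> M" for b using that by force
  then have "infdist (x + y) M - infdist x M \<le> infdist y M"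
    unfolding infdist_notempty[OF Mne] by (intro cINF_greatest[OF Mne]) auto
  then show ?thesis by simp
qed

lemma infdist_scale:
  fixes M :: "'x::real_normed_vector set"
  assumes M0: "0 \<in> M" and Mscale: "\<And>c x. x \<in> M \<Longrightarrow> c *\<^sub>R x \<in> M"
  shows "infdist (c *\<^sub>R x) M = \<bar>c\<bar> * infdist x M"
proof (cases "c = 0")
  case True
  then show ?thesis using M0 by simp
next
  case False
  have Mne: "M \<noteq> {}" using M0 by blast
  have img: "M = (\<lambda>a. c *\<^sub>R a) ` M"
  proof
    show "(\<lambda>a. c *\<^sub>R a) ` M \<subseteq> M" using Mscale by blast
    show "M \<subseteq> (\<lambda>a. c *\<^sub>R a) ` M"
    proof
      fix m assume "m \<in> M"
      then have "inverse c *\<^sub>R m \<in> M" by (rule Mscale)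
      moreover have "m = c *\<^sub>R (inverse c *\<^sub>R m)" using False by simp
      ultimately show "m \<in> (\<lambda>a. c *\<^sub>R a) ` M" by blast
    qed
  qed
  have "infdist (c *\<^sub>R x) M = (INF a\<in>M. dist (c *\<^sub>R x) (c *\<^sub>R a))"
    unfolding infdist_notempty[OF Mne] by (subst img) (simp add: image_comp o_def)
  also have "\<dots> = (INF a\<in>M. \<bar>c\<bar> * dist x a)"
    by (simp add: dist_norm scaleR_diff_right[symmetric])
  also have "\<dots> = \<bar>c\<bar> * (INF a\<in>M. dist x a)"
  proof -
    have "mono ((*) \<bar>c\<bar>)" by (rule monoI) (simp add: mult_left_mono)
    moreover have "continuous (at_right (Inf (dist x ` M))) ((*) \<bar>c\<bar>)" by (intro continuous_intros)
    ultimately show ?thesis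
      using continuous_at_Inf_mono[of "(*) \<bar>c\<bar>" "dist x ` M"] Mne by (simp add: image_comp o_def)
  qed
  finally show ?thesis unfolding infdist_notempty[OF Mne] .
qed

lemma HB_sep:
  fixes M :: "'x::complex_normed_vector set"
  assumes M0: "0 \<in> M" and Madd: "\<And>x y. x \<in> M \<Longrightarrow> y \<in> M \<Longrightarrow> x + y \<in> M"
    and Mc: "\<And>c x. x \<in> M \<Longrightarrow> cscale c x \<in> M" and x0: "x0 \<notin> closure M"
  shows "\<exists>f::'x \<Rightarrow> complex. bounded_clinear f \<and> (\<forall>m\<in>M. f m = 0) \<and> f x0 \<noteq> 0"
proof -
  have Ms: "\<And>c x. x \<in> M \<Longrightarrow> c *\<^sub>R x \<in> M" by (simp add: scaleR_cscale Mc)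
  define p where "p x = infdist x M" for x
  have padd: "p (x + y) \<le> p x + p y" for x y unfolding p_def by (rule infdist_add_le[OF M0 Madd])
  have pscale: "p (c *\<^sub>R x) = \<bar>c\<bar> * p x" for c x unfolding p_def by (rule infdist_scale[OF M0 Ms])
  obtain F where Fadd: "\<And>x y. F (x + y) = F x + F y" and Fscale: "\<And>c x. F (c *\<^sub>R x) = c * F x"
    and Fp: "\<And>x. F x \<le> p x" and Fx0: "F x0 = p x0"
    using real_hahn_banach[of p x0] padd pscale by auto
  have Fabs: "\<bar>F x\<bar> \<le> norm x" for x
  proof -
    have "p x \<le> norm x" unfolding p_def using infdist_le[OF M0, of x] by simp
    moreover have "- F x \<le> p x" using Fp[of "- x"] Fscale[of "-1" x] pscale[of "-1" x] by simp
    ultimately show ?thesis using Fp[of x] by linarith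
  qed
  have FM: "F m = 0" if "m \<in> M" for m
  proof -
    have "p m = 0" unfolding p_def using that by simp
    moreover have "- F m \<le> p m" using Fp[of "- m"] Fscale[of "-1" m] pscale[of "-1" m] by simp
    ultimately show ?thesis using Fp[of m] by linarith
  qed
  have px0: "p x0 > 0"
  proof -
    have "infdist x0 M \<noteq> 0" using x0 in_closure_iff_infdist_zero[of M x0] M0 by blast
    then show ?thesis unfolding p_def using infdist_nonneg[of x0 M] by linarith
  qed
  define f where "f x = Complex (F x) (- F (cscale \<i> x))" for x
  have Fdiff: "F (x - y) = F x - F y" for x y
    using Fadd[of "x - y" y] by simp
  have Fc: "F (cscale c x) = Re c * F x + Im c * F (cscale \<i> x)" for c x
  proof -
    have "c = complex_of_real (Re c) + complex_of_real (Im c) * \<i>" by (simp add: complex_eq_iff)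
    then have "cscale c x = Re c *\<^sub>R x + Im c *\<^sub>R cscale \<i> x"
      by (metis cscale_add_left cscale_cscale scaleR_cscale)
    then show ?thesis by (simp add: Fadd Fscale)
  qed
  have "bounded_clinear f"
  proof (rule bounded_clinear_intro[where K=2])
    fix x y show "f (x + y) = f x + f y" by (simp add: f_def Fadd cscale_add_right complex_eq_iff)
  next
    fix c and x :: 'x
    have "cscale \<i> (cscale c x) = cscale (\<i> * c) x" by (simp add: cscale_cscale)
    then have e: "F (cscale \<i> (cscale c x)) = - Im c * F x + Re c * F (cscale \<i> x)"
      using Fc[of "\<i> * c" x] by simp
    show "f (cscale c x) = cscale c (f x)"
      by (simp add: f_def cscale_complex_def complex_eq_iff Fc[of c x] e algebra_simps)
  next
    fix x
    have "cmod (f x) \<le> \<bar>F x\<bar> + \<bar>F (cscale \<i> x)\<bar>"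
      unfolding f_def using cmod_le[of "Complex (F x) (- F (cscale \<i> x))"] by simp
    also have "\<dots> \<le> norm x + norm (cscale \<i> x)" using Fabs by (intro add_mono) auto
    also have "\<dots> = 2 * norm x" by (simp add: norm_cscale)
    finally show "norm (f x) \<le> 2 * norm x" by simp
  qed
  moreover have "\<forall>m\<in>M. f m = 0" using FM Mc by (simp add: f_def complex_eq_iff)
  moreover have "f x0 \<noteq> 0" using Fx0 px0 by (simp add: f_def complex_eq_iff)
  ultimately show ?thesis by blast
qed


lemma cluster_closed:
  fixes s :: "nat \<Rightarrow> 'v::topological_space"
  assumes "inf (nhds c) (filtermap s sequentially) \<noteq> bot" "closed S" "eventually (\<lambda>n. s n \<in> S) sequentially"
  shows "c \<in> S"
proof (rule ccontr)
  assume "c \<notin> S"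
  then have e1: "eventually (\<lambda>v. v \<in> - S) (nhds c)" using assms(2) by (intro eventually_nhds_in_open) auto
  have e2: "eventually (\<lambda>v. v \<in> S) (filtermap s sequentially)" using assms(3) by (simp add: eventually_filtermap)
  have "eventually (\<lambda>v. False) (inf (nhds c) (filtermap s sequentially))"
    unfolding eventually_inf using e1 e2 by blast
  then show False using assms(1) by (simp add: eventually_False)
qed

lemma bounded_clinear_cmult: "bounded_clinear f \<Longrightarrow> bounded_clinear (\<lambda>x. a * (f x :: complex))"
  using bounded_clinear_cscale_fun[of f a] by (simp add: cscale_complex_def)

lemma closed_coord_eq: "closed {v :: 'i \<Rightarrow> complex. v g = v h + v k}"
  by (intro closed_Collect_eq continuous_on_add continuous_on_product_coordinates)

lemma closed_coord_eq2: "closed {v :: 'i \<Rightarrow> complex. v g = a * v h}"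
  by (intro closed_Collect_eq continuous_on_mult continuous_on_const continuous_on_product_coordinates)

lemma closed_coord_le: "closed {v :: 'i \<Rightarrow> complex. cmod (v g - L) \<le> r}"
  by (intro closed_Collect_le continuous_on_norm continuous_on_diff continuous_on_const continuous_on_product_coordinates)

lemma refl_dense:
  fixes DT :: "'x::complex_normed_vector set"
  assumes refl: "reflexive_space TYPE('x)" and cl: "clinear_on DT T" and sc: "sect_cond DT T \<phi>"
    and inj: "\<forall>x\<in>DT. T x = 0 \<longrightarrow> x = 0"
  shows "closure (T ` DT) = UNIV"
proof (rule ccontr)
  assume "closure (T ` DT) \<noteq> UNIV"
  then obtain x0 where x0: "x0 \<notin> closure (T ` DT)" by blast
  have R0: "0 \<in> T ` DT" using image_eqI[of 0 T 0 DT] cl_zero[OF cl] cl_zero_in[OF cl] by simp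
  have Radd: "x + y \<in> T ` DT" if xy: "x \<in> T ` DT" "y \<in> T ` DT" for x y
  proof -
    obtain a b where ab: "a \<in> DT" "b \<in> DT" "x = T a" "y = T b" using xy by blast
    have "x + y = T (a + b)" using ab cl_add[OF cl] by simp
    then show ?thesis using cl_add_in[OF cl ab(1,2)] by blast
  qed
  have Rc: "cscale c x \<in> T ` DT" if xr: "x \<in> T ` DT" for c x
  proof -
    obtain a where a: "a \<in> DT" "x = T a" using xr by blast
    have "cscale c x = T (cscale c a)" using a cl_cscale[OF cl] by simp
    then show ?thesis using cl_cscale_in[OF cl a(1)] by blast
  qed
  obtain f :: "'x \<Rightarrow> complex" where fb: "bounded_clinear f" and fR: "\<forall>m\<in>T ` DT. f m = 0" and fx0: "f x0 \<noteq> 0"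
    using HB_sep[OF R0 Radd Rc x0] by blast
  have \<phi>: "\<phi> < pi" using sc by (simp add: sect_cond_def)
  obtain K where K: "\<forall>l \<in> SC \<phi>. onorm (\<lambda>x. cscale l (resolvent DT T l x)) \<le> K"
    and rs: "SC \<phi> \<subseteq> resolvent_set DT T" using sc unfolding sect_cond_SC by blast
  define K' where "K' = max K 0"
  have K'0: "K' \<ge> 0" by (simp add: K'_def)
  define Lt where "Lt t = complex_of_real (- t)" for t :: real
  define P where "P t y = cscale (Lt t) (resolvent DT T (Lt t) y)" for t y
  have rsL: "t > 0 \<Longrightarrow> Lt t \<in> resolvent_set DT T" for t using neg_in_SC[OF _ \<phi>] rs by (auto simp: Lt_def)
  have Pb: "t > 0 \<Longrightarrow> bounded_clinear (P t)" for t
    unfolding P_def[abs_def] using res_scaled_bl[OF rsL] by blast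
  have Pn: "norm (P t y) \<le> K' * norm y" if t: "t > 0" for t y
  proof -
    have "norm (P t y) \<le> onorm (P t) * norm y" by (rule bounded_clinear_norm[OF Pb[OF t]])
    also have "\<dots> \<le> K' * norm y" using K neg_in_SC[OF t \<phi>] unfolding K'_def P_def[abs_def] Lt_def
      by (intro mult_right_mono) auto
    finally show ?thesis .
  qed
  have Pin: "t > 0 \<Longrightarrow> P t y \<in> DT" for t y
    unfolding P_def using cl_cscale_in[OF cl res_in[OF rsL]] by blast
  have TR: "t > 0 \<Longrightarrow> T (resolvent DT T (Lt t) y) = P t y - y" for t y
    unfolding P_def using res_T[OF rsL] by blast
  have F1: "f (P t z) = f z" if t: "t > 0" for t z
  proof -
    have "P t z - z \<in> T ` DT"
      using image_eqI[of "P t z - z" T "resolvent DT T (Lt t) z" DT] TR[OF t, of z] res_in[OF rsL[OF t]] by simp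
    then have "f (P t z - z) = 0" using fR by blast
    then show ?thesis using bounded_clinear_diff[OF fb] by simp
  qed
  have F2: "norm (w - P s w) \<le> onorm (resolvent DT T (Lt s)) * (t * ((K' + 1) * norm z))"
    if s: "s > 0" and t: "t > 0" and w: "w = P t z" for s t z w
  proof -
    note rsS = rsL[OF s] and rsT = rsL[OF t]
    have wD: "w \<in> DT" using Pin[OF t] w by simp
    have e1: "w - P s w = - T (resolvent DT T (Lt s) w)" using TR[OF s, of w] by simp
    have "resolvent DT T (Lt s) (cscale (Lt s) w - T w) = w" by (rule res_left[OF rsS wD])
    then have "cscale (Lt s) (resolvent DT T (Lt s) w) - resolvent DT T (Lt s) (T w) = w"
      by (simp add: bounded_clinear_diff[OF res_bcl[OF rsS]] bounded_clinear_cscale[OF res_bcl[OF rsS]])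
    then have e2: "T (resolvent DT T (Lt s) w) = resolvent DT T (Lt s) (T w)"
      using TR[OF s, of w] unfolding P_def by (simp add: algebra_simps)
    have e3: "T w = cscale (Lt t) (P t z - z)"
      using w cl_cscale[OF cl res_in[OF rsT]] TR[OF t] unfolding P_def by simp
    have "norm (T w) = t * norm (P t z - z)" using t by (simp add: e3 norm_cscale Lt_def)
    also have "norm (P t z - z) \<le> (K' + 1) * norm z"
      using norm_triangle_ineq4[of "P t z" z] Pn[OF t, of z] by (simp add: algebra_simps)
    then have "t * norm (P t z - z) \<le> t * ((K' + 1) * norm z)" using t by (intro mult_left_mono) auto
    finally have nT: "norm (T w) \<le> t * ((K' + 1) * norm z)" .
    have "norm (w - P s w) = norm (resolvent DT T (Lt s) (T w))" using e1 e2 by simp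
    also have "\<dots> \<le> onorm (resolvent DT T (Lt s)) * norm (T w)"
      by (rule bounded_clinear_norm[OF res_bcl[OF rsS]])
    also have "\<dots> \<le> onorm (resolvent DT T (Lt s)) * (t * ((K' + 1) * norm z))"
      using nT by (intro mult_left_mono onorm_pos_le bounded_clinear_bl res_bcl[OF rsS])
    finally show ?thesis .
  qed
  define tn where "tn n = inverse (real (Suc n))" for n
  have tn: "tn n > 0" for n by (simp add: tn_def)
  have tn0: "tn \<longlonglongrightarrow> 0" unfolding tn_def by (rule LIMSEQ_inverse_real_of_nat)
  define sv where "sv n = (\<lambda>g::'x \<Rightarrow> complex. if bounded_clinear g then g (P (tn n) x0) else 0)" for n
  define r where "r g = (if bounded_clinear g then onorm g * (K' * norm x0) else 0)" for g :: "'x \<Rightarrow> complex"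
  have svK: "sv n \<in> PiE UNIV (\<lambda>g. cball 0 (r g))" for n
  proof -
    have "cmod (g (P (tn n) x0)) \<le> onorm g * (K' * norm x0)" if g: "bounded_clinear g" for g
    proof -
      have "cmod (g (P (tn n) x0)) \<le> onorm g * norm (P (tn n) x0)" by (rule bounded_clinear_norm[OF g])
      also have "\<dots> \<le> onorm g * (K' * norm x0)"
        using Pn[OF tn] by (intro mult_left_mono onorm_pos_le bounded_clinear_bl g)
      finally show ?thesis .
    qed
    then show ?thesis by (auto simp: sv_def r_def PiE_def extensional_def)
  qed
  have cK: "compact (PiE UNIV (\<lambda>g. cball (0::complex) (r g)))"
  proof -
    have "compactin (product_topology (\<lambda>i. euclidean) UNIV) (PiE UNIV (\<lambda>g. cball (0::complex) (r g)))"
      by (subst compactin_PiE) auto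
    then show ?thesis by (simp add: euclidean_product_topology)
  qed
  obtain c where cluster: "inf (nhds c) (filtermap sv sequentially) \<noteq> bot"
    using cK[unfolded compact_filter, rule_format, of "filtermap sv sequentially"] svK
    by (auto simp: filtermap_bot_iff eventually_filtermap)
  have c_add: "c (\<lambda>x. f1 x + f2 x) = c f1 + c f2" if "bounded_clinear f1" "bounded_clinear f2" for f1 f2 :: "'x \<Rightarrow> complex"
  proof -
    have "c \<in> {v. v (\<lambda>x. f1 x + f2 x) = v f1 + v f2}"
      by (rule cluster_closed[OF cluster closed_coord_eq])
         (use that bounded_clinear_plus[OF that] in \<open>auto simp: sv_def\<close>)
    then show ?thesis by simp
  qed
  have c_mult: "c (\<lambda>x. a * f1 x) = a * c f1" if "bounded_clinear f1" for a and f1 :: "'x \<Rightarrow> complex"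
  proof -
    have "c \<in> {v. v (\<lambda>x. a * f1 x) = a * v f1}"
      by (rule cluster_closed[OF cluster closed_coord_eq2])
         (use that bounded_clinear_cmult[OF that] in \<open>auto simp: sv_def\<close>)
    then show ?thesis by simp
  qed
  have c_bnd: "cmod (c g) \<le> (K' * norm x0) * onorm g" if g: "bounded_clinear g" for g :: "'x \<Rightarrow> complex"
  proof -
    have "c \<in> {v. cmod (v g - 0) \<le> r g}"
      by (rule cluster_closed[OF cluster closed_coord_le]) (use svK in \<open>auto simp: PiE_def Pi_def\<close>)
    then show ?thesis using g by (simp add: r_def mult.commute)
  qed
  have c_lim: "c g = L" if g: "bounded_clinear g"
    and ev: "\<And>e. e > 0 \<Longrightarrow> eventually (\<lambda>n. cmod (g (P (tn n) x0) - L) \<le> e) sequentially" for g L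
  proof -
    have "cmod (c g - L) \<le> e" if e: "e > 0" for e
    proof -
      have "c \<in> {v. cmod (v g - L) \<le> e}"
        by (rule cluster_closed[OF cluster closed_coord_le]) (use ev[OF e] g in \<open>simp add: sv_def\<close>)
      then show ?thesis by simp
    qed
    then have "cmod (c g - L) \<le> 0" using field_le_epsilon[of "cmod (c g - L)" 0] by simp
    then show ?thesis by simp
  qed
  obtain y where y: "\<forall>g. bounded_clinear g \<longrightarrow> c g = g y"
    using refl unfolding reflexive_space_def
    using c_add c_mult c_bnd by blast
  have yP: "y = P 1 y"
  proof (rule ccontr)
    assume ne: "y \<noteq> P 1 y"
    have "y - P 1 y \<notin> closure {0}" using ne by simp
    then obtain h :: "'x \<Rightarrow> complex" where hb: "bounded_clinear h" and hy: "h (y - P 1 y) \<noteq> 0"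
      using HB_sep[of "{0}" "y - P 1 y"] by auto
    define g where "g x = h (x - P 1 x)" for x
    have gb: "bounded_clinear g" unfolding g_def[abs_def]
      by (intro bounded_clinear_compose[OF hb] bounded_clinear_minus bounded_clinear_ident Pb) simp
    define B where "B = onorm h * (onorm (resolvent DT T (Lt 1)) * ((K' + 1) * norm x0))"
    have gn: "cmod (g (P (tn n) x0)) \<le> B * tn n" for n
    proof -
      have "cmod (g (P (tn n) x0)) \<le> onorm h * norm (P (tn n) x0 - P 1 (P (tn n) x0))"
        unfolding g_def by (rule bounded_clinear_norm[OF hb])
      also have "\<dots> \<le> onorm h * (onorm (resolvent DT T (Lt 1)) * (tn n * ((K' + 1) * norm x0)))"
        using F2[of 1 "tn n" "P (tn n) x0" x0] tn by (intro mult_left_mono onorm_pos_le bounded_clinear_bl hb) auto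
      finally show ?thesis by (simp add: B_def algebra_simps)
    qed
    have "c g = 0"
    proof (rule c_lim[OF gb])
      fix e :: real assume e: "e > 0"
      have "(\<lambda>n. tn n * B) \<longlonglongrightarrow> 0" by (rule tendsto_mult_left_zero[OF tn0])
      then have "(\<lambda>n. B * tn n) \<longlonglongrightarrow> 0" by (simp add: mult.commute)
      then have "eventually (\<lambda>n. B * tn n < e) sequentially" using e by (rule order_tendstoD)
      then show "eventually (\<lambda>n. cmod (g (P (tn n) x0) - 0) \<le> e) sequentially"
      proof (rule eventually_mono)
        fix n assume "B * tn n < e"
        then show "cmod (g (P (tn n) x0) - 0) \<le> e" using gn[of n] by simp
      qed
    qed
    moreover have "c g = h (y - P 1 y)" using y gb by (simp add: g_def)
    ultimately show False using hy by simp
  qed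
  have yD: "y \<in> DT" using Pin[of 1 y] yP by simp
  have "T y = 0"
  proof -
    have "T y = T (cscale (Lt 1) (resolvent DT T (Lt 1) y))" using yP unfolding P_def by simp
    also have "\<dots> = cscale (Lt 1) (T (resolvent DT T (Lt 1) y))" by (rule cl_cscale[OF cl res_in[OF rsL]]) simp
    also have "\<dots> = cscale (Lt 1) (P 1 y - y)" using TR[of 1 y] by simp
    finally show ?thesis using yP by simp
  qed
  then have "y = 0" using inj yD by blast
  then have "c f = 0" using y fb bounded_clinear_zero[OF fb] by simp
  moreover have "c f = f x0"
    by (rule c_lim[OF fb]) (simp add: F1[OF tn])
  ultimately show False using fx0 by simp
qed


lemma R_sect_cond_SC: "R_sect_cond DT T \<sigma> \<longleftrightarrow> sect_angle DT T < \<sigma> \<and> \<sigma> < pi \<and>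
     R_bounded {(\<lambda>x. cscale l (resolvent DT T l x)) | l. l \<in> SC \<sigma>}"
  by (simp add: R_sect_cond_def SC_def)

context blk begin

lemma AA_inj:
  assumes sA: "sectorial DA A" and sD: "sectorial DD D"
  shows "\<forall>z\<in>DM. AA z = 0 \<longrightarrow> z = 0"
proof (intro ballI impI)
  fix z assume z: "z \<in> DM" and e: "AA z = 0"
  have "norm (block_op A (\<lambda>_. 0) (\<lambda>_. 0) D z) \<le> KK * norm (AA z)" using Kb z by blast
  then have "block_op A (\<lambda>_. 0) (\<lambda>_. 0) D z = 0" using e by simp
  then have "A (fst z) = 0" "D (snd z) = 0" by (simp_all add: block_op_def zero_prod_def)
  then have "fst z = 0" "snd z = 0" using sect_inj[OF sA] sect_inj[OF sD] z by auto
  then show "z = 0" by (simp add: prod_eq_iff)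
qed

lemma a_fwd:
  assumes sA: "sectorial DA A" and sD: "sectorial DD D"
    and psi: "max (sect_angle DA A) (sect_angle DD D) \<le> \<psi>" "\<psi> < pi"
    and sAA: "sectorial_of_angle DM AA \<psi>"
  shows "closure (AA ` DM) = UNIV" "M_cond \<psi> (M1 DA A B C DD D)"
proof -
  have sAA': "sectorial DM AA" and ang: "sect_angle DM AA \<le> \<psi>" using sAA by (auto simp: sectorial_of_angle_def)
  show "closure (AA ` DM) = UNIV" using sAA' by (simp add: sectorial_def)
  show "M_cond \<psi> (M1 DA A B C DD D)"
    unfolding M_cond_def
  proof (intro allI impI)
    fix \<phi> assume "\<psi> < \<phi> \<and> \<phi> < pi"
    then have \<phi>: "\<psi> < \<phi>" "\<phi> < pi" by auto
    have scA: "sect_cond DA A \<phi>" using sect_angle_lt[OF sA] psi \<phi> by auto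
    have scD: "sect_cond DD D \<phi>" using sect_angle_lt[OF sD] psi \<phi> by auto
    have scAA: "sect_cond DM AA \<phi>" using sect_angle_lt[OF sAA'] ang \<phi> by auto
    obtain KA where FA: "Rb Qc (SC \<phi>) (\<lambda>l x. cscale l (RA l x)) KA"
      using sc_Rb(2)[OF scA] by (auto simp: RA_def[abs_def])
    obtain KD where FD: "Rb Qc (SC \<phi>) (\<lambda>l x. cscale l (RD l x)) KD"
      using sc_Rb(2)[OF scD] by (auto simp: RD_def[abs_def])
    obtain KR where RR: "Rb Qc (SC \<phi>) (\<lambda>l z. cscale l (resolvent DM AA l z)) KR"
      using sc_Rb(2)[OF scAA] by auto
    note g = G1[OF sc_Rb(1)[OF scA] sc_Rb(1)[OF scD] FA FD sc_Rb(1)[OF scAA] RR]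
    obtain K where K: "Rb Qc (SC \<phi>) (\<lambda>l. inv (M1 DA A B C DD D l)) K" using g(2) by blast
    show "(\<forall>l\<in>- closure (sector \<phi>). invertible_bdd (M1 DA A B C DD D l)) \<and>
          (\<exists>K. \<forall>l\<in>- closure (sector \<phi>). onorm (inv (M1 DA A B C DD D l)) \<le> K)"
      using g(1) Rb_onorm[OF K] unfolding SC_def by blast
  qed
qed

lemma M_to_Rb:
  assumes "\<forall>l\<in>I. invertible_bdd (M l)" "\<exists>K. \<forall>l\<in>I. onorm (inv (M l)) \<le> K"
  shows "\<exists>K. Rb Qc I (\<lambda>l. inv (M l)) K"
proof -
  obtain K where K: "\<forall>l\<in>I. onorm (inv (M l)) \<le> K" using assms(2) by blast
  have "\<forall>l\<in>I. bounded_clinear (inv (M l))" using assms(1) invertible_bdd_inv(3) by blast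
  from onorm_Rb[OF this K] show ?thesis by blast
qed

lemma MR_to_Rb:
  assumes "\<forall>l\<in>I. invertible_bdd (M l)" "R_bounded {inv (M l) | l. l \<in> I}"
  shows "\<exists>K. Rb Qt I (\<lambda>l. inv (M l)) K"
  using assms(2) unfolding R_bounded_iff by blast

lemma AA_from_M1:
  assumes scA: "sect_cond DA A \<phi>" and scD: "sect_cond DD D \<phi>"
    and KA: "Rb Q (SC \<phi>) (\<lambda>l x. cscale l (RA l x)) KA" and KD: "Rb Q (SC \<phi>) (\<lambda>l x. cscale l (RD l x)) KD"
    and M: "(\<forall>l\<in>SC \<phi>. invertible_bdd (M1 DA A B C DD D l) \<and> (\<exists>K. Rb Q (SC \<phi>) (\<lambda>l. inv (M1 DA A B C DD D l)) K)) \<or>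
            (\<forall>l\<in>SC \<phi>. invertible_bdd (M2 DA A B C DD D l) \<and> (\<exists>K. Rb Q (SC \<phi>) (\<lambda>l. inv (M2 DA A B C DD D l)) K))"
  shows "\<forall>l\<in>SC \<phi>. l \<in> resolvent_set DM AA" "\<exists>K. Rb Q (SC \<phi>) (\<lambda>l z. cscale l (resolvent DM AA l z)) K"
proof -
  note rA = sc_Rb(1)[OF scA] and rD = sc_Rb(1)[OF scD]
  have M1: "(\<forall>l\<in>SC \<phi>. invertible_bdd (M1 DA A B C DD D l)) \<and> (\<exists>K. Rb Q (SC \<phi>) (\<lambda>l. inv (M1 DA A B C DD D l)) K)"
  proof (cases "SC \<phi> = {}")
    case True
    have "Rb Q (SC \<phi>) (\<lambda>l. inv (M1 DA A B C DD D l)) 1"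
      unfolding Rb_def
    proof (intro allI impI)
      fix m ls xs assume "Q m ls" "\<forall>n<m. ls n \<in> SC \<phi>"
      then have "m = 0" using True by (cases m) auto
      then show "rad_avg m (\<lambda>n. inv (M1 DA A B C DD D (ls n)) (xs n)) \<le> 1\<^sup>2 * rad_avg m xs"
        by (simp add: rad_avg_def)
    qed
    then show ?thesis using True by blast
  next
    case False
    show ?thesis
    proof (cases "\<forall>l\<in>SC \<phi>. invertible_bdd (M1 DA A B C DD D l) \<and> (\<exists>K. Rb Q (SC \<phi>) (\<lambda>l. inv (M1 DA A B C DD D l)) K)")
      case True
      then show ?thesis using False by blast
    next
      case c2: False
      then have h: "\<forall>l\<in>SC \<phi>. invertible_bdd (M2 DA A B C DD D l)" "\<exists>K. Rb Q (SC \<phi>) (\<lambda>l. inv (M2 DA A B C DD D l)) K"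
        using M False by blast+
      then obtain K where "Rb Q (SC \<phi>) (\<lambda>l. inv (M2 DA A B C DD D l)) K" by blast
      from G3[OF rA rD KA KD h(1) this] show ?thesis by blast
    qed
  qed
  then obtain K where K: "Rb Q (SC \<phi>) (\<lambda>l. inv (M1 DA A B C DD D l)) K" by blast
  note g = G2[OF rA rD KA KD conjunct1[OF M1] K]
  show "\<forall>l\<in>SC \<phi>. l \<in> resolvent_set DM AA" by (rule g(1))
  show "\<exists>K. Rb Q (SC \<phi>) (\<lambda>l z. cscale l (resolvent DM AA l z)) K" by (rule g(2))
qed

lemma a_sc:
  assumes sA: "sectorial DA A" and sD: "sectorial DD D"
    and psi: "max (sect_angle DA A) (sect_angle DD D) \<le> \<psi>" "\<psi> < pi"
    and M: "M_cond \<psi> (M1 DA A B C DD D) \<or> M_cond \<psi> (M2 DA A B C DD D)"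
    and \<phi>: "\<psi> < \<phi>" "\<phi> < pi"
  shows "sect_cond DM AA \<phi>"
proof -
  have scA: "sect_cond DA A \<phi>" using sect_angle_lt[OF sA] psi \<phi> by auto
  have scD: "sect_cond DD D \<phi>" using sect_angle_lt[OF sD] psi \<phi> by auto
  obtain KA where FA: "Rb Qc (SC \<phi>) (\<lambda>l x. cscale l (RA l x)) KA"
    using sc_Rb(2)[OF scA] by (auto simp: RA_def[abs_def])
  obtain KD where FD: "Rb Qc (SC \<phi>) (\<lambda>l x. cscale l (RD l x)) KD"
    using sc_Rb(2)[OF scD] by (auto simp: RD_def[abs_def])
  have M': "(\<forall>l\<in>SC \<phi>. invertible_bdd (M1 DA A B C DD D l) \<and> (\<exists>K. Rb Qc (SC \<phi>) (\<lambda>l. inv (M1 DA A B C DD D l)) K)) \<or>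
            (\<forall>l\<in>SC \<phi>. invertible_bdd (M2 DA A B C DD D l) \<and> (\<exists>K. Rb Qc (SC \<phi>) (\<lambda>l. inv (M2 DA A B C DD D l)) K))"
  proof -
    have r: "(\<forall>l\<in>SC \<phi>. invertible_bdd (M l)) \<and> (\<exists>K. Rb Qc (SC \<phi>) (\<lambda>l. inv (M l)) K)"
      if "M_cond \<psi> M" for M :: "complex \<Rightarrow> 'c::complex_normed_vector \<Rightarrow> 'c"
    proof -
      have "(\<forall>l\<in>SC \<phi>. invertible_bdd (M l)) \<and> (\<exists>K. \<forall>l\<in>SC \<phi>. onorm (inv (M l)) \<le> K)"
        using that \<phi> unfolding M_cond_def SC_def by blast
      then show ?thesis using M_to_Rb[of "SC \<phi>" M] by blast
    qed
    show ?thesis using M r[of "M1 DA A B C DD D"] r[of "M2 DA A B C DD D"] by blast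
  qed
  note h = AA_from_M1[OF scA scD FA FD M']
  obtain K where "Rb Qc (SC \<phi>) (\<lambda>l z. cscale l (resolvent DM AA l z)) K" using h(2) by blast
  moreover have "0 < \<phi>" using sect_angle_nonneg[OF sA] psi \<phi> by linarith
  ultimately show ?thesis using sc_intro \<phi>(2) h(1) by blast
qed

lemma a_bwd:
  assumes sA: "sectorial DA A" and sD: "sectorial DD D" and psi: "\<psi> < pi"
    and rng: "closure (AA ` DM) = UNIV"
    and sc: "\<And>\<phi>. \<psi> < \<phi> \<Longrightarrow> \<phi> < pi \<Longrightarrow> sect_cond DM AA \<phi>"
  shows "sectorial_of_angle DM AA \<psi>"
proof -
  have "closure DA = UNIV" "closure DD = UNIV" using sA sD by (auto simp: sectorial_def)
  then have cDM: "closure DM = UNIV" by (simp add: closure_Times)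
  have "sect_cond DM AA ((\<psi> + pi) / 2)" using sc psi by simp
  then have "sectorial DM AA" unfolding sectorial_def using clAA cDM rng by blast
  moreover have "sect_angle DM AA \<le> \<psi>" by (rule sect_angle_le_intro[OF psi sc])
  ultimately show ?thesis by (simp add: sectorial_of_angle_def)
qed

lemma R_facts:
  assumes "R_sectorial DT T" "R_angle DT T \<le> \<psi>" "\<psi> < \<phi>" "\<phi> < pi"
  shows "sect_cond DT T \<phi>" "\<exists>K. Rb Qt (SC \<phi>) (\<lambda>l x. cscale l (resolvent DT T l x)) K"
proof -
  have r: "R_sect_cond DT T \<phi>" using R_angle_lt[OF assms(1)] assms by auto
  then have "sect_angle DT T < \<phi>" by (simp add: R_sect_cond_def)
  moreover have "sectorial DT T" using assms(1) by (simp add: R_sectorial_def)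
  ultimately show "sect_cond DT T \<phi>" using sect_angle_lt assms(4) by blast
  show "\<exists>K. Rb Qt (SC \<phi>) (\<lambda>l x. cscale l (resolvent DT T l x)) K"
    using r unfolding R_sect_cond_SC R_bounded_iff by blast
qed

lemma b_fwd:
  assumes sA: "R_sectorial DA A" and sD: "R_sectorial DD D"
    and psi: "max (R_angle DA A) (R_angle DD D) \<le> \<psi>" "\<psi> < pi"
    and sAA: "R_sectorial_of_angle DM AA \<psi>"
  shows "closure (AA ` DM) = UNIV" "M_R_cond \<psi> (M1 DA A B C DD D)"
proof -
  have sAA': "R_sectorial DM AA" and ang: "R_angle DM AA \<le> \<psi>" using sAA by (auto simp: R_sectorial_of_angle_def)
  show "closure (AA ` DM) = UNIV" using sAA' by (simp add: sectorial_def R_sectorial_def)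
  show "M_R_cond \<psi> (M1 DA A B C DD D)"
    unfolding M_R_cond_def
  proof (intro allI impI)
    fix \<phi> assume "\<psi> < \<phi> \<and> \<phi> < pi"
    then have \<phi>: "\<psi> < \<phi>" "\<phi> < pi" by auto
    note fA = R_facts[OF sA _ \<phi>] and fD = R_facts[OF sD _ \<phi>] and fAA = R_facts[OF sAA' ang \<phi>]
    have scA: "sect_cond DA A \<phi>" and scD: "sect_cond DD D \<phi>" using fA(1) fD(1) psi by auto
    obtain KA where FA: "Rb Qt (SC \<phi>) (\<lambda>l x. cscale l (RA l x)) KA"
      using fA(2) psi by (auto simp: RA_def[abs_def])
    obtain KD where FD: "Rb Qt (SC \<phi>) (\<lambda>l x. cscale l (RD l x)) KD"
      using fD(2) psi by (auto simp: RD_def[abs_def])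
    obtain KR where RR: "Rb Qt (SC \<phi>) (\<lambda>l z. cscale l (resolvent DM AA l z)) KR"
      using fAA(2) by auto
    note g = G1[OF sc_Rb(1)[OF scA] sc_Rb(1)[OF scD] FA FD sc_Rb(1)[OF fAA(1)] RR]
    have "\<forall>l\<in>SC \<phi>. bounded_clinear (inv (M1 DA A B C DD D l))"
      using g(1) invertible_bdd_inv(3) by blast
    then have "R_bounded {inv (M1 DA A B C DD D l) | l. l \<in> SC \<phi>}"
      using g(2) unfolding R_bounded_iff by blast
    then show "(\<forall>l\<in>- closure (sector \<phi>). invertible_bdd (M1 DA A B C DD D l)) \<and>
          R_bounded {inv (M1 DA A B C DD D l) | l. l \<in> - closure (sector \<phi>)}"
      using g(1) unfolding SC_def by blast
  qed
qed

lemma b_sc: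
  assumes sA: "R_sectorial DA A" and sD: "R_sectorial DD D"
    and psi: "max (R_angle DA A) (R_angle DD D) \<le> \<psi>" "\<psi> < pi"
    and M: "M_R_cond \<psi> (M1 DA A B C DD D) \<or> M_R_cond \<psi> (M2 DA A B C DD D)"
    and \<phi>: "\<psi> < \<phi>" "\<phi> < pi"
  shows "sect_cond DM AA \<phi>" "\<exists>K. Rb Qt (SC \<phi>) (\<lambda>l z. cscale l (resolvent DM AA l z)) K"
proof -
  note fA = R_facts[OF sA _ \<phi>] and fD = R_facts[OF sD _ \<phi>]
  have scA: "sect_cond DA A \<phi>" and scD: "sect_cond DD D \<phi>" using fA(1) fD(1) psi by auto
  obtain KA where FA: "Rb Qt (SC \<phi>) (\<lambda>l x. cscale l (RA l x)) KA"
    using fA(2) psi by (auto simp: RA_def[abs_def])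
  obtain KD where FD: "Rb Qt (SC \<phi>) (\<lambda>l x. cscale l (RD l x)) KD"
    using fD(2) psi by (auto simp: RD_def[abs_def])
  have M': "(\<forall>l\<in>SC \<phi>. invertible_bdd (M1 DA A B C DD D l) \<and> (\<exists>K. Rb Qt (SC \<phi>) (\<lambda>l. inv (M1 DA A B C DD D l)) K)) \<or>
            (\<forall>l\<in>SC \<phi>. invertible_bdd (M2 DA A B C DD D l) \<and> (\<exists>K. Rb Qt (SC \<phi>) (\<lambda>l. inv (M2 DA A B C DD D l)) K))"
  proof -
    have r: "(\<forall>l\<in>SC \<phi>. invertible_bdd (M l)) \<and> (\<exists>K. Rb Qt (SC \<phi>) (\<lambda>l. inv (M l)) K)"
      if "M_R_cond \<psi> M" for M :: "complex \<Rightarrow> 'c::complex_normed_vector \<Rightarrow> 'c"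
    proof -
      have "(\<forall>l\<in>SC \<phi>. invertible_bdd (M l)) \<and> R_bounded {inv (M l) | l. l \<in> SC \<phi>}"
        using that \<phi> unfolding M_R_cond_def SC_def by blast
      then show ?thesis using MR_to_Rb[of "SC \<phi>" M] by blast
    qed
    show ?thesis using M r[of "M1 DA A B C DD D"] r[of "M2 DA A B C DD D"] by blast
  qed
  note h = AA_from_M1[OF scA scD FA FD M']
  show "\<exists>K. Rb Qt (SC \<phi>) (\<lambda>l z. cscale l (resolvent DM AA l z)) K" by (rule h(2))
  then obtain K where "Rb Qt (SC \<phi>) (\<lambda>l z. cscale l (resolvent DM AA l z)) K" by blast
  then have "Rb Qc (SC \<phi>) (\<lambda>l z. cscale l (resolvent DM AA l z)) K" by (rule Rb_Qt_Qc)
  moreover have "0 < \<phi>"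
  proof -
    have "sectorial DA A" using sA by (simp add: R_sectorial_def)
    then have "0 \<le> R_angle DA A" using sect_angle_nonneg R_angle_ge[OF sA] by fastforce
    then show ?thesis using psi \<phi> by linarith
  qed
  ultimately show "sect_cond DM AA \<phi>" using sc_intro \<phi>(2) h(1) by blast
qed

lemma b_bwd:
  assumes sA: "R_sectorial DA A" and sD: "R_sectorial DD D" and psi: "\<psi> < pi"
    and rng: "closure (AA ` DM) = UNIV"
    and sc: "\<And>\<phi>. \<psi> < \<phi> \<Longrightarrow> \<phi> < pi \<Longrightarrow> sect_cond DM AA \<phi> \<and> (\<exists>K. Rb Qt (SC \<phi>) (\<lambda>l z. cscale l (resolvent DM AA l z)) K)"
  shows "R_sectorial_of_angle DM AA \<psi>"
proof -
  have sA': "sectorial DA A" and sD': "sectorial DD D" using sA sD by (auto simp: R_sectorial_def)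
  have so: "sectorial_of_angle DM AA \<psi>" using a_bwd[OF sA' sD' psi rng] sc by blast
  then have ang: "sect_angle DM AA \<le> \<psi>" by (simp add: sectorial_of_angle_def)
  have rsc: "R_sect_cond DM AA \<phi>" if \<phi>: "\<psi> < \<phi>" "\<phi> < pi" for \<phi>
  proof -
    obtain K where K: "Rb Qt (SC \<phi>) (\<lambda>l z. cscale l (resolvent DM AA l z)) K" using sc[OF \<phi>] by blast
    have "\<forall>l\<in>SC \<phi>. l \<in> resolvent_set DM AA" using sc_Rb(1) sc[OF \<phi>] by blast
    then have "\<forall>l\<in>SC \<phi>. bounded_clinear (\<lambda>z. cscale l (resolvent DM AA l z))" using res_scaled_bl by blast
    then have "R_bounded {(\<lambda>x. cscale l (resolvent DM AA l x)) | l. l \<in> SC \<phi>}"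
      unfolding R_bounded_iff using K by blast
    then show ?thesis unfolding R_sect_cond_SC using ang \<phi> by simp
  qed
  have "R_sectorial DM AA" unfolding R_sectorial_def using so rsc[of "(\<psi> + pi) / 2"] psi
    by (auto simp: sectorial_of_angle_def)
  moreover have "R_angle DM AA \<le> \<psi>" by (rule R_angle_le_intro[OF psi rsc])
  ultimately show ?thesis by (simp add: R_sectorial_of_angle_def)
qed

end


theorem theorem4p1:
  fixes DA :: "'a::{complex_normed_vector, banach} set" and A :: "'a \<Rightarrow> 'a"
    and DD :: "'b::{complex_normed_vector, banach} set" and D :: "'b \<Rightarrow> 'b"
    and DB :: "'b set" and B :: "'b \<Rightarrow> 'a"
    and DC :: "'a set" and C :: "'a \<Rightarrow> 'b"
    and cA cD :: real
  assumes A_op: "clinear_on DA A" "closed_op DA A" "closure DA = UNIV"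
    and D_op: "clinear_on DD D" "closed_op DD D" "closure DD = UNIV"
    and B_op: "clinear_on DB B" "DD \<subseteq> DB"
    and C_op: "clinear_on DC C" "DA \<subseteq> DC"
    and cnsts: "cA \<ge> 0" "cD \<ge> 0"
    and C_bound: "\<forall>x\<in>DA. norm (C x) \<le> cA * norm (A x)"
    and B_bound: "\<forall>y\<in>DD. norm (B y) \<le> cD * norm (D y)"
    and DA_bound: "\<exists>K. \<forall>z\<in>DA \<times> DD.
                     norm (block_op A (\<lambda>_. 0) (\<lambda>_. 0) D z) \<le> K * norm (block_op A B C D z)"
  shows
   "(sectorial DA A \<and> sectorial DD D \<longrightarrow>
      (\<forall>\<psi>. max (sect_angle DA A) (sect_angle DD D) \<le> \<psi> \<and> \<psi> < pi \<longrightarrow>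
        (sectorial_of_angle (DA \<times> DD) (block_op A B C D) \<psi> \<longleftrightarrow>
          closure (block_op A B C D ` (DA \<times> DD)) = UNIV \<and>
          (M_cond \<psi> (M1 DA A B C DD D) \<or> M_cond \<psi> (M2 DA A B C DD D))))) \<and>
    (R_sectorial DA A \<and> R_sectorial DD D \<longrightarrow>
      (\<forall>\<psi>. max (R_angle DA A) (R_angle DD D) \<le> \<psi> \<and> \<psi> < pi \<longrightarrow>
        (R_sectorial_of_angle (DA \<times> DD) (block_op A B C D) \<psi> \<longleftrightarrow>
          closure (block_op A B C D ` (DA \<times> DD)) = UNIV \<and>
          (M_R_cond \<psi> (M1 DA A B C DD D) \<or> M_R_cond \<psi> (M2 DA A B C DD D))))) \<and>
    (reflexive_space TYPE('a \<times> 'b) \<longrightarrow>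
      (sectorial DA A \<and> sectorial DD D \<longrightarrow>
        (\<forall>\<psi>. max (sect_angle DA A) (sect_angle DD D) \<le> \<psi> \<and> \<psi> < pi \<longrightarrow>
          (sectorial_of_angle (DA \<times> DD) (block_op A B C D) \<psi> \<longleftrightarrow>
            (M_cond \<psi> (M1 DA A B C DD D) \<or> M_cond \<psi> (M2 DA A B C DD D))))) \<and>
      (R_sectorial DA A \<and> R_sectorial DD D \<longrightarrow>
        (\<forall>\<psi>. max (R_angle DA A) (R_angle DD D) \<le> \<psi> \<and> \<psi> < pi \<longrightarrow>
          (R_sectorial_of_angle (DA \<times> DD) (block_op A B C D) \<psi> \<longleftrightarrow>
            (M_R_cond \<psi> (M1 DA A B C DD D) \<or> M_R_cond \<psi> (M2 DA A B C DD D))))))"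
proof -
  obtain KK where KK: "\<forall>z\<in>DA \<times> DD.
                     norm (block_op A (\<lambda>_. 0) (\<lambda>_. 0) D z) \<le> KK * norm (block_op A B C D z)"
    using DA_bound by blast
  interpret blk DA A DD D DB B DC C cA cD KK
    using A_op(1) D_op(1) B_op C_op cnsts C_bound B_bound KK by unfold_locales auto
  have partA: "sectorial_of_angle DM AA \<psi> \<longleftrightarrow>
          closure (AA ` DM) = UNIV \<and> (M_cond \<psi> (M1 DA A B C DD D) \<or> M_cond \<psi> (M2 DA A B C DD D))"
    if sA: "sectorial DA A" and sD: "sectorial DD D"
      and psi: "max (sect_angle DA A) (sect_angle DD D) \<le> \<psi>" "\<psi> < pi" for \<psi>
  proof
    assume "sectorial_of_angle DM AA \<psi>"
    from a_fwd[OF sA sD psi this] show "closure (AA ` DM) = UNIV \<and> (M_cond \<psi> (M1 DA A B C DD D) \<or> M_cond \<psi> (M2 DA A B C DD D))"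
      by blast
  next
    assume h: "closure (AA ` DM) = UNIV \<and> (M_cond \<psi> (M1 DA A B C DD D) \<or> M_cond \<psi> (M2 DA A B C DD D))"
    show "sectorial_of_angle DM AA \<psi>"
      using a_bwd[OF sA sD psi(2)] a_sc[OF sA sD psi] h by blast
  qed
  have partB: "R_sectorial_of_angle DM AA \<psi> \<longleftrightarrow>
          closure (AA ` DM) = UNIV \<and> (M_R_cond \<psi> (M1 DA A B C DD D) \<or> M_R_cond \<psi> (M2 DA A B C DD D))"
    if sA: "R_sectorial DA A" and sD: "R_sectorial DD D"
      and psi: "max (R_angle DA A) (R_angle DD D) \<le> \<psi>" "\<psi> < pi" for \<psi>
  proof
    assume "R_sectorial_of_angle DM AA \<psi>"
    from b_fwd[OF sA sD psi this] show "closure (AA ` DM) = UNIV \<and> (M_R_cond \<psi> (M1 DA A B C DD D) \<or> M_R_cond \<psi> (M2 DA A B C DD D))"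
      by blast
  next
    assume h: "closure (AA ` DM) = UNIV \<and> (M_R_cond \<psi> (M1 DA A B C DD D) \<or> M_R_cond \<psi> (M2 DA A B C DD D))"
    show "R_sectorial_of_angle DM AA \<psi>"
      using b_bwd[OF sA sD psi(2)] b_sc[OF sA sD psi] h by blast
  qed
  have partC: "(sectorial DA A \<and> sectorial DD D \<longrightarrow>
        (\<forall>\<psi>. max (sect_angle DA A) (sect_angle DD D) \<le> \<psi> \<and> \<psi> < pi \<longrightarrow>
          (sectorial_of_angle DM AA \<psi> \<longleftrightarrow>
            (M_cond \<psi> (M1 DA A B C DD D) \<or> M_cond \<psi> (M2 DA A B C DD D))))) \<and>
      (R_sectorial DA A \<and> R_sectorial DD D \<longrightarrow>
        (\<forall>\<psi>. max (R_angle DA A) (R_angle DD D) \<le> \<psi> \<and> \<psi> < pi \<longrightarrow>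
          (R_sectorial_of_angle DM AA \<psi> \<longleftrightarrow>
            (M_R_cond \<psi> (M1 DA A B C DD D) \<or> M_R_cond \<psi> (M2 DA A B C DD D)))))"
    if refl: "reflexive_space TYPE('a \<times> 'b)"
  proof (intro conjI impI allI)
    fix \<psi> assume s: "sectorial DA A \<and> sectorial DD D"
      and psi: "max (sect_angle DA A) (sect_angle DD D) \<le> \<psi> \<and> \<psi> < pi"
    have sA: "sectorial DA A" and sD: "sectorial DD D" and psi': "max (sect_angle DA A) (sect_angle DD D) \<le> \<psi>" "\<psi> < pi"
      using s psi by auto
    show "sectorial_of_angle DM AA \<psi> \<longleftrightarrow> (M_cond \<psi> (M1 DA A B C DD D) \<or> M_cond \<psi> (M2 DA A B C DD D))"
    proof
      assume "sectorial_of_angle DM AA \<psi>"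
      then show "M_cond \<psi> (M1 DA A B C DD D) \<or> M_cond \<psi> (M2 DA A B C DD D)" using partA[OF sA sD psi'] by blast
    next
      assume M: "M_cond \<psi> (M1 DA A B C DD D) \<or> M_cond \<psi> (M2 DA A B C DD D)"
      have "sect_cond DM AA ((\<psi> + pi) / 2)" using a_sc[OF sA sD psi' M] psi' by simp
      then have "closure (AA ` DM) = UNIV" using refl_dense[OF refl clAA _ AA_inj[OF sA sD]] by blast
      then show "sectorial_of_angle DM AA \<psi>" using partA[OF sA sD psi'] M by blast
    qed
  next
    fix \<psi> assume s: "R_sectorial DA A \<and> R_sectorial DD D"
      and psi: "max (R_angle DA A) (R_angle DD D) \<le> \<psi> \<and> \<psi> < pi"
    have sA: "R_sectorial DA A" and sD: "R_sectorial DD D" and psi': "max (R_angle DA A) (R_angle DD D) \<le> \<psi>" "\<psi> < pi"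
      using s psi by auto
    have sA': "sectorial DA A" and sD': "sectorial DD D" using sA sD by (auto simp: R_sectorial_def)
    show "R_sectorial_of_angle DM AA \<psi> \<longleftrightarrow> (M_R_cond \<psi> (M1 DA A B C DD D) \<or> M_R_cond \<psi> (M2 DA A B C DD D))"
    proof
      assume "R_sectorial_of_angle DM AA \<psi>"
      then show "M_R_cond \<psi> (M1 DA A B C DD D) \<or> M_R_cond \<psi> (M2 DA A B C DD D)" using partB[OF sA sD psi'] by blast
    next
      assume M: "M_R_cond \<psi> (M1 DA A B C DD D) \<or> M_R_cond \<psi> (M2 DA A B C DD D)"
      have "sect_cond DM AA ((\<psi> + pi) / 2)" using b_sc(1)[OF sA sD psi' M] psi' by simp
      then have "closure (AA ` DM) = UNIV" using refl_dense[OF refl clAA _ AA_inj[OF sA' sD']] by blast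
      then show "R_sectorial_of_angle DM AA \<psi>" using partB[OF sA sD psi'] M by blast
    qed
  qed
  show ?thesis using partA partB partC by blast
qed


end
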